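(* Let $n\ge1$, $s\in(0,1)$, $\alpha>0$, and let $u\in L_s(\mathbb{R}^n)$ satisfy $e^{\alpha u}\in L^1(B_1)$. Then $t^{1-2s}e^{\alpha\overline{u}}\in L^1_{\mathrm{loc}}(B_1\times[0,\infty))$. Moreover: (i) there exist $\delta=\delta(n,s)>0$ and $C=C(n,s,\|u_+\|_{L_s(\mathbb{R}^n)})>0$ such that $$\|t^{1-2s}e^{\alpha\overline{u}}\|_{L^1(D_{1/2})}\leq C\left(\|e^{\alpha u}\|_{L^1(B_1)}+\|e^{\alpha u}\|_{L^1(B_1)}^{\delta}\right);$$ (ii) for every sufficiently small $\delta_0>0$ there exists $r_0=r_0(n,s,\delta_0)>0$ such that $$\int_0^{r_0}\int_{B_{1/2}}t^{1-2s}e^{\alpha\overline{u}}dxdt\leq C\left(\|e^{\alpha u}\|_{L^1(B_1)}+\|e^{\alpha u}\|_{L^1(B_1)}^{1-\delta_0}\right),$$ with $C$ depending on $n,s,\|u_+\|_{L_s(\mathbb{R}^n)}$.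
   Context: $L_s(\mathbb{R}^n)=\{u\in L^1_{\mathrm{loc}}:\|u\|_{L_s(\mathbb{R}^n)}:=\int_{\mathbb{R}^n}\frac{|u(x)|}{1+|x|^{n+2s}}dx<\infty\}$, $u_+=\max(u,0)$. For $X=(x,t)\in\mathbb{R}^n\times(0,\infty)$, $\overline{u}(X)=\int_{\mathbb{R}^n}P(X,y)u(y)dy$ with $P(X,y)=d_{n,s}\frac{t^{2s}}{|(x-y,t)|^{n+2s}}$, where $d_{n,s}>0$ is chosen so that $\int_{\mathbb{R}^n}P(X,y)dy=1$ (the Caffarelli–Silvestre extension). $B_r$ is the ball of radius $r$ centered at $0$ in $\mathbb{R}^n$, and $D_r=B^{n+1}_r(0)\cap\mathbb{R}^{n+1}_+$ where $B^{n+1}_r(0)$ is the ball in $\mathbb{R}^{n+1}$ and $\mathbb{R}^{n+1}_+=\mathbb{R}^n\times[0,\infty)$. *)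

theory Defs
  imports "HOL-Analysis.Analysis"
begin

text \<open>Points of the upper half space are pairs (x,t) :: 'a \<times> real, where 'a is R^n
  (n = DIM('a)); the norm on 'a \<times> real is the Euclidean norm sqrt(|x|^2+t^2).\<close>

definition Ls_weight :: "real \<Rightarrow> 'a::euclidean_space \<Rightarrow> real" where
  "Ls_weight s x = 1 + norm x powr (real DIM('a) + 2 * s)"

definition in_Ls :: "real \<Rightarrow> ('a::euclidean_space \<Rightarrow> real) \<Rightarrow> bool" where
  "in_Ls s u \<longleftrightarrow> integrable lborel (\<lambda>x. u x / Ls_weight s x)"

definition Ls_norm :: "real \<Rightarrow> ('a::euclidean_space \<Rightarrow> real) \<Rightarrow> real" where
  "Ls_norm s u = (\<integral>x. \<bar>u x\<bar> / Ls_weight s x \<partial>lborel)"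

definition pos_part :: "('a \<Rightarrow> real) \<Rightarrow> 'a \<Rightarrow> real" where
  "pos_part u x = max (u x) 0"

definition P0 :: "real \<Rightarrow> 'a::euclidean_space \<times> real \<Rightarrow> 'a \<Rightarrow> real" where
  "P0 s X y = snd X powr (2 * s) / norm (fst X - y, snd X) powr (real DIM('a) + 2 * s)"

text \<open>The constant d_{n,s} making the kernel integrate to 1 (by translation and scaling
  invariance it suffices to normalise at X = (0,1)).\<close>
definition d_const :: "real \<Rightarrow> 'a::euclidean_space itself \<Rightarrow> real" where
  "d_const s _ = 1 / (\<integral>y. P0 s ((0::'a), 1) y \<partial>lborel)"

definition Pker :: "real \<Rightarrow> 'a::euclidean_space \<times> real \<Rightarrow> 'a \<Rightarrow> real" where
  "Pker s X y = d_const s TYPE('a) * P0 s X y"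

definition ext :: "real \<Rightarrow> ('a::euclidean_space \<Rightarrow> real) \<Rightarrow> 'a \<times> real \<Rightarrow> real" where
  "ext s u X = (\<integral>y. Pker s X y * u y \<partial>lborel)"

definition Dhalf :: "real \<Rightarrow> ('a::euclidean_space \<times> real) set" where
  "Dhalf r = ball 0 r \<inter> {X. snd X \<ge> 0}"

definition wexp :: "real \<Rightarrow> real \<Rightarrow> ('a::euclidean_space \<Rightarrow> real) \<Rightarrow> 'a \<times> real \<Rightarrow> real" where
  "wexp s \<alpha> u X = snd X powr (1 - 2 * s) * exp (\<alpha> * ext s u X)"

definition locally_L1_on :: "('b::euclidean_space \<Rightarrow> real) \<Rightarrow> 'b set \<Rightarrow> bool" where
  "locally_L1_on f S \<longleftrightarrow> (\<forall>K. compact K \<and> K \<subseteq> S \<longrightarrow> set_integrable lborel K f)"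

definition expL1 :: "real \<Rightarrow> ('a::euclidean_space \<Rightarrow> real) \<Rightarrow> real" where
  "expL1 \<alpha> u = (\<integral>x\<in>ball 0 1. exp (\<alpha> * u x) \<partial>lborel)"

end

theory Submission
  imports Defs
begin


lemma norm_le_pair1: "norm (y::'a::euclidean_space) \<le> norm (y, 1::real)"
  by (simp add: norm_Pair real_le_rsqrt)

lemma I0_finite:
  fixes p :: real
  assumes p: "p > real DIM('a::euclidean_space)"
  shows "(\<integral>\<^sup>+y. ennreal (1 / norm (y::'a, 1::real) powr p) \<partial>lborel) < \<infinity>"
proof -
  define n where "n = real DIM('a)"
  define V where "V = unit_ball_vol n"
  define q where "q = (2::real) powr (n - p)"
  have q0: "0 < q" "q < 1" using p by (auto simp: q_def n_def powr_less_one)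
  define a :: "nat \<Rightarrow> real" where "a j = 2 powr (p - real j * p)" for j
  have pt: "ennreal (1 / norm (y, 1::real) powr p) \<le> (\<Sum>j. ennreal (a j) * indicator (ball 0 (2^j)) y)" for y :: 'a
  proof -
    define \<rho> where "\<rho> = norm (y, 1::real)"
    have r1: "\<rho> \<ge> 1" unfolding \<rho>_def by (simp add: norm_Pair)
    define L where "L = log 2 \<rho>"
    have L0: "L \<ge> 0" using r1 by (simp add: L_def)
    define j0 where "j0 = nat (floor L) + 1"
    have le: "2 powr (real j0 - 1) \<le> \<rho>"
    proof -
      have "real j0 - 1 = of_int (floor L)" using L0 by (simp add: j0_def)
      also have "\<dots> \<le> L" by simp
      finally have "2 powr (real j0 - 1) \<le> 2 powr L" by simp
      also have "\<dots> = \<rho>" using r1 by (simp add: L_def)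
      finally show ?thesis .
    qed
    have "\<rho> < 2 ^ j0"
    proof -
      have "\<rho> = 2 powr L" using r1 by (simp add: L_def)
      also have "\<dots> < 2 powr (real j0)" using L0 by (simp add: j0_def) linarith
      also have "\<dots> = 2 ^ j0" by (simp add: powr_realpow)
      finally show ?thesis .
    qed
    then have yin: "y \<in> ball 0 (2^j0)"
      using norm_le_pair1[of y] by (simp add: \<rho>_def)
    have "1 / \<rho> powr p \<le> 1 / (2 powr (real j0 - 1)) powr p"
      using le p n_def
      by (intro divide_left_mono powr_mono2 mult_pos_pos) auto
    also have "\<dots> = a j0" unfolding a_def
      by (simp add: powr_powr algebra_simps flip: powr_minus powr_minus_divide)
    finally have "ennreal (1 / \<rho> powr p) \<le> ennreal (a j0) * indicator (ball 0 (2^j0)) y"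
      using yin by (simp add: ennreal_leI)
    also have "\<dots> \<le> (\<Sum>j. ennreal (a j) * indicator (ball 0 (2^j)) y)"
    proof -
      have "sum (\<lambda>j. ennreal (a j) * indicator (ball 0 (2^j)) y) {j0} \<le> (\<Sum>j. ennreal (a j) * indicator (ball 0 (2^j)) y)"
        by (intro sum_le_suminf summableI) auto
      then show ?thesis by (simp only: sum.insert finite.emptyI empty_iff sum.empty add_0_right not_False_eq_True)
    qed
    finally show ?thesis by (simp add: \<rho>_def)
  qed
  have "(\<integral>\<^sup>+y. ennreal (1 / norm (y::'a, 1::real) powr p) \<partial>lborel) \<le>
     (\<integral>\<^sup>+y. (\<Sum>j. ennreal (a j) * indicator (ball (0::'a) (2^j)) y) \<partial>lborel)"
    by (intro nn_integral_mono pt)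
  also have "\<dots> = (\<Sum>j. (\<integral>\<^sup>+y. ennreal (a j) * indicator (ball (0::'a) (2^j)) y \<partial>lborel))"
  proof -
    have [measurable]: "\<And>r. ball (0::'a) r \<in> sets borel" by simp
    show ?thesis by (intro nn_integral_suminf) measurable
  qed
  also have "\<dots> = (\<Sum>j. ennreal (a j) * emeasure lborel (ball (0::'a) (2^j)))"
    by (intro suminf_cong nn_integral_cmult_indicator) simp
  also have "\<dots> = (\<Sum>j. ennreal (a j * (V * (2^j)^DIM('a))))"
    by (intro suminf_cong) (simp add: emeasure_ball V_def n_def a_def ennreal_mult)
  also have "\<dots> = (\<Sum>j. ennreal (V * 2 powr p * q ^ j))"
  proof -
    have "a j * (V * (2^j)^DIM('a)) = V * 2 powr p * q ^ j" for j
    proof -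
      have "((2::real)^j)^DIM('a) = 2 powr (real j * n)" 
      proof -
        have "2 powr (real j * n) = 2 powr real (j * DIM('a))" by (simp add: n_def)
        also have "\<dots> = 2 ^ (j * DIM('a))" by (rule powr_realpow) simp
        finally show ?thesis by (simp add: power_mult)
      qed
      moreover have "q ^ j = 2 powr (real j * (n - p))" 
        by (simp add: q_def powr_realpow[symmetric] powr_powr flip: powr_power)
      ultimately show ?thesis unfolding a_def
        by (simp add: algebra_simps flip: powr_add)
    qed
    then show ?thesis by (intro suminf_cong arg_cong[where f=ennreal]) presburger
  qed
  also have "\<dots> = ennreal (\<Sum>j. V * 2 powr p * q ^ j)"
    using q0 by (intro suminf_ennreal2) (auto simp: V_def n_def intro!: summable_mult summable_geometric)
  also have "\<dots> < \<infinity>" by simp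
  finally show ?thesis .
qed


lemma norm_pair_scale: "t > 0 \<Longrightarrow> norm (t *\<^sub>R z, t) = t * norm (z::'a::euclidean_space, 1::real)"
proof -
  assume t: "t > 0"
  have "t\<^sup>2 * (norm z)\<^sup>2 + t\<^sup>2 = t\<^sup>2 * ((norm z)\<^sup>2 + 1)" by (simp add: algebra_simps)
  then show ?thesis using t by (simp add: norm_Pair power_mult_distrib real_sqrt_mult)
qed

lemma norm_pair_uminus: "norm (- z, t) = norm (z::'a::euclidean_space, t::real)"
  by (simp add: norm_Pair)

lemma P0_meas[measurable]: "(\<lambda>y. P0 s X y) \<in> borel_measurable borel"
  unfolding P0_def by measurable

lemma P0_meas_x[measurable]: "(\<lambda>x. P0 s (x, t) y) \<in> borel_measurable borel"
  unfolding P0_def by measurable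

lemma P0_scale:
  fixes z :: "'a::euclidean_space"
  assumes t: "t > 0" and w: "norm (w::'a) = t * norm z"  and  wz: "norm (w, t) = t * norm (z, 1::real)"
  shows "t ^ DIM('a) * (t powr (2 * s) / norm (w, t) powr (real DIM('a) + 2 * s)) = 1 / norm (z, 1::real) powr (real DIM('a) + 2 * s)"
proof -
  have r: "norm (z, 1::real) > 0" by (simp add: norm_Pair, smt (verit) zero_le_power2)
  have "norm (w, t) powr (real DIM('a) + 2 * s) = t powr (real DIM('a)) * t powr (2 * s) * norm (z, 1::real) powr (real DIM('a) + 2 * s)"
    using t r by (simp add: wz powr_mult powr_add)
  then show ?thesis using t r by (simp add: powr_realpow)
qed

lemma P0_cov_y:
  fixes x :: "'a::euclidean_space"
  assumes t: "t > 0"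
  shows "(\<integral>\<^sup>+y. ennreal (P0 s (x,t) y) \<partial>lborel) = (\<integral>\<^sup>+z. ennreal (P0 s (0::'a,1) z) \<partial>lborel)"
proof -
  have "(\<integral>\<^sup>+y. ennreal (P0 s (x,t) y) \<partial>lborel) = (\<integral>\<^sup>+z. ennreal (\<bar>t\<bar>^DIM('a)) * ennreal (P0 s (x,t) (x + t *\<^sub>R z)) \<partial>lborel)"
    using t by (subst lborel_affine[of t x]) (simp_all add: nn_integral_density nn_integral_distr)
  also have "\<dots> = (\<integral>\<^sup>+z. ennreal (P0 s (0::'a,1) z) \<partial>lborel)"
  proof (intro nn_integral_cong)
    fix z :: 'a
    have "t ^ DIM('a) * P0 s (x,t) (x + t *\<^sub>R z) = P0 s (0::'a,1) z"
      unfolding P0_def using P0_scale[OF t, of "- (t *\<^sub>R z)" z s] t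
      by (simp add: norm_pair_uminus norm_pair_scale)
    then show "ennreal (\<bar>t\<bar>^DIM('a)) * ennreal (P0 s (x,t) (x + t *\<^sub>R z)) = ennreal (P0 s (0::'a,1) z)"
      using t by (subst ennreal_mult'[symmetric]) simp_all
  qed
  finally show ?thesis .
qed

lemma P0_cov_x:
  fixes y :: "'a::euclidean_space"
  assumes t: "t > 0"
  shows "(\<integral>\<^sup>+x. ennreal (P0 s (x,t) y) \<partial>lborel) = (\<integral>\<^sup>+z. ennreal (P0 s (0::'a,1) z) \<partial>lborel)"
proof -
  have "(\<integral>\<^sup>+x. ennreal (P0 s (x,t) y) \<partial>lborel) = (\<integral>\<^sup>+z. ennreal (\<bar>-t\<bar>^DIM('a)) * ennreal (P0 s (y + (-t) *\<^sub>R z,t) y) \<partial>lborel)"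
    using t by (subst lborel_affine[of "-t" y]) (simp_all add: nn_integral_density nn_integral_distr)
  also have "\<dots> = (\<integral>\<^sup>+z. ennreal (P0 s (0::'a,1) z) \<partial>lborel)"
  proof (intro nn_integral_cong)
    fix z :: 'a
    have "t ^ DIM('a) * P0 s (y + (-t) *\<^sub>R z,t) y = P0 s (0::'a,1) z"
      unfolding P0_def using P0_scale[OF t, of "- (t *\<^sub>R z)" z s] t
      by (simp add: norm_pair_uminus norm_pair_scale)
    then show "ennreal (\<bar>-t\<bar>^DIM('a)) * ennreal (P0 s (y + (-t) *\<^sub>R z,t) y) = ennreal (P0 s (0::'a,1) z)"
      using t by (subst ennreal_mult'[symmetric]) simp_all
  qed
  finally show ?thesis .
qed


lemma P0_nonneg: "P0 s X y \<ge> 0"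
  unfolding P0_def by simp

lemma P0_01: "P0 s (0::'a::euclidean_space, 1) z = 1 / norm (z, 1::real) powr (real DIM('a) + 2 * s)"
  unfolding P0_def by (simp add: norm_pair_uminus)

lemma c0_nn:
  assumes s: "s > 0"
  shows "(\<integral>\<^sup>+z. ennreal (P0 s (0::'a::euclidean_space,1) z) \<partial>lborel) = ennreal (\<integral>z. P0 s (0::'a,1) z \<partial>lborel)"
proof -
  have fin: "(\<integral>\<^sup>+z. ennreal (P0 s (0::'a,1) z) \<partial>lborel) < \<infinity>"
    using I0_finite[of "real DIM('a) + 2 * s", where 'a='a] s by (simp add: P0_01)
  have "(\<integral>z. P0 s (0::'a,1) z \<partial>lborel) = enn2real (\<integral>\<^sup>+z. ennreal (P0 s (0::'a,1) z) \<partial>lborel)"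
    by (rule integral_eq_nn_integral) (auto simp: P0_nonneg)
  then show ?thesis using fin by simp
qed

lemma c0_pos:
  assumes s: "s > 0"
  shows "0 < (\<integral>z. P0 s (0::'a::euclidean_space,1) z \<partial>lborel)"
proof -
  let ?p = "real DIM('a) + 2 * s"
  have "\<forall>z\<in>ball (0::'a) 1. 1 / 2 powr ?p \<le> P0 s (0::'a,1) z"
  proof
    fix z :: 'a assume "z \<in> ball 0 1"
    then have "norm z < 1" by simp
    then have "(norm z)\<^sup>2 < 1" by (simp add: abs_square_less_1)
    then have "norm (z, 1::real) \<le> 2" by (simp add: norm_Pair real_sqrt_le_iff')
    moreover have "norm (z, 1::real) > 0" by (simp add: norm_Pair, smt (verit) zero_le_power2)
    ultimately show "1 / 2 powr ?p \<le> P0 s (0::'a,1) z"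
      unfolding P0_01 using s by (intro divide_left_mono powr_mono2 mult_pos_pos) auto
  qed
  then have "(\<integral>\<^sup>+z. ennreal (1 / 2 powr ?p) * indicator (ball (0::'a) 1) z \<partial>lborel) \<le> (\<integral>\<^sup>+z. ennreal (P0 s (0::'a,1) z) \<partial>lborel)"
    by (intro nn_integral_mono) (auto simp: indicator_def ennreal_leI)
  moreover have "(\<integral>\<^sup>+z. ennreal (1 / 2 powr ?p) * indicator (ball (0::'a) 1) z \<partial>lborel) = ennreal (1 / 2 powr ?p) * emeasure lborel (ball (0::'a) 1)"
    by (intro nn_integral_cmult_indicator) simp
  moreover have "0 < ennreal (1 / 2 powr ?p) * emeasure lborel (ball (0::'a) 1)"
    by (simp add: emeasure_ball flip: ennreal_mult)
  ultimately have "0 < ennreal (\<integral>z. P0 s (0::'a,1) z \<partial>lborel)"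
    using c0_nn[OF s, where 'a='a] by (metis order_less_le_trans)
  then show ?thesis by simp
qed

lemma d_pos: "s > 0 \<Longrightarrow> d_const s TYPE('a::euclidean_space) > 0"
  unfolding d_const_def using c0_pos[of s, where 'a='a] by simp

lemma Pker_nonneg: "s > 0 \<Longrightarrow> Pker s (X::'a::euclidean_space \<times> real) y \<ge> 0"
  unfolding Pker_def using d_pos[of s, where 'a='a] P0_nonneg[of s X y] by simp

lemma Pker_norm_y:
  assumes s: "s > 0" and t: "t > 0"
  shows "(\<integral>\<^sup>+y. ennreal (Pker s (x::'a::euclidean_space, t) y) \<partial>lborel) = 1"
proof -
  have "(\<integral>\<^sup>+y. ennreal (Pker s (x, t) y) \<partial>lborel) = ennreal (d_const s TYPE('a)) * (\<integral>\<^sup>+y. ennreal (P0 s (x, t) y) \<partial>lborel)"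
    unfolding Pker_def using d_pos[OF s, where 'a='a] 
    by (subst nn_integral_cmult[symmetric]) (auto simp: ennreal_mult' less_imp_le)
  also have "\<dots> = 1"
    using P0_cov_y[OF t, of s x] c0_nn[OF s, where 'a='a] c0_pos[OF s, where 'a='a]
    by (simp add: d_const_def flip: ennreal_mult)
  finally show ?thesis .
qed

lemma Pker_norm_x:
  assumes s: "s > 0" and t: "t > 0"
  shows "(\<integral>\<^sup>+x. ennreal (Pker s (x::'a::euclidean_space, t) y) \<partial>lborel) = 1"
proof -
  have "(\<integral>\<^sup>+x. ennreal (Pker s (x, t) y) \<partial>lborel) = ennreal (d_const s TYPE('a)) * (\<integral>\<^sup>+x. ennreal (P0 s (x, t) y) \<partial>lborel)"
    unfolding Pker_def using d_pos[OF s, where 'a='a] 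
    by (subst nn_integral_cmult[symmetric]) (auto simp: ennreal_mult' less_imp_le)
  also have "\<dots> = 1"
    using P0_cov_x[OF t, of s y] c0_nn[OF s, where 'a='a] c0_pos[OF s, where 'a='a]
    by (simp add: d_const_def flip: ennreal_mult)
  finally show ?thesis .
qed

lemma P0_t0: "P0 s (x, 0) y = 0"
  unfolding P0_def by simp

lemma Pker_norm_x_le:
  assumes s: "s > 0" and t: "t \<ge> 0"
  shows "(\<integral>\<^sup>+x. ennreal (Pker s (x::'a::euclidean_space, t) y) \<partial>lborel) \<le> 1"
  using Pker_norm_x[OF s, of t y] t by (cases "t = 0") (auto simp: Pker_def P0_t0)



lemma norm_pair_pos: "norm (z::'a::euclidean_space, t::real) \<ge> \<bar>t\<bar>"
  by (simp add: norm_Pair real_le_rsqrt)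

lemma norm_pair_ge_fst: "norm (z::'a::euclidean_space, t::real) \<ge> norm z"
  by (simp add: norm_Pair real_le_rsqrt)

lemma norm_pair1_le: "norm (y::'a::euclidean_space) \<ge> 1 \<Longrightarrow> norm (y, 1::real) \<le> sqrt 2 * norm y"
proof -
  assume y: "norm y \<ge> 1"
  then have "1 \<le> (norm y)\<^sup>2" by (simp add: one_le_power)
  then have "(norm y)\<^sup>2 + 1 \<le> 2 * (norm y)\<^sup>2" by simp
  then have "sqrt ((norm y)\<^sup>2 + 1) \<le> sqrt (2 * (norm y)\<^sup>2)" by (rule real_sqrt_le_mono)
  then show ?thesis by (simp add: norm_Pair real_sqrt_mult)
qed

lemma div_powr_mono:
  fixes a b c p :: real
  assumes "0 < a" "a \<le> b" "0 \<le> p" "0 \<le> c"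
  shows "c / b powr p \<le> c / a powr p"
proof -
  have "a powr p \<le> b powr p" using assms by (intro powr_mono2) auto
  moreover have "0 < a powr p" using assms by simp
  ultimately show ?thesis using assms by (intro divide_left_mono) auto
qed

lemma P0_far:
  fixes x y :: "'a::euclidean_space"
  assumes t: "t > 0" and r: "0 \<le> r" "r < 1" and x: "norm x \<le> r" and y: "norm y \<ge> 1" and s: "s > 0"
  shows "P0 s (x,t) y \<le> t powr (2 * s) * (sqrt 2 / (1 - r)) powr (real DIM('a) + 2 * s) * (1 / norm (y, 1::real) powr (real DIM('a) + 2 * s))"
proof -
  let ?p = "real DIM('a) + 2 * s"
  define \<kappa> where "\<kappa> = (1 - r) / sqrt 2"
  have k0: "\<kappa> > 0" using r by (simp add: \<kappa>_def)
  have "norm y - r \<ge> (1 - r) * norm y" using y r by (simp add: algebra_simps) (metis mult_left_mono mult.right_neutral y)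
  moreover have "norm (x - y) \<ge> norm y - norm x" by (metis norm_minus_commute norm_triangle_ineq2)
  ultimately have "norm (x - y) \<ge> (1 - r) * norm y" using x by linarith
  moreover have "(1 - r) * norm y \<ge> \<kappa> * norm (y, 1::real)"
  proof -
    have "\<kappa> * norm (y, 1::real) \<le> \<kappa> * (sqrt 2 * norm y)"
      using norm_pair1_le[OF y] k0 by (intro mult_left_mono) auto
    also have "\<dots> = (1 - r) * norm y" by (simp add: \<kappa>_def)
    finally show ?thesis .
  qed
  ultimately have rho: "norm (x - y, t) \<ge> \<kappa> * norm (y, 1::real)"
    using norm_pair_ge_fst[where z="x - y" and t=t] by linarith
  have n1: "norm (y, 1::real) > 0" using norm_pair_pos[where z=y and t=1] by (simp only: abs_one)
  have "P0 s (x,t) y = t powr (2 * s) / norm (x - y, t) powr ?p" by (simp add: P0_def)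
  also have "\<dots> \<le> t powr (2 * s) / (\<kappa> * norm (y, 1::real)) powr ?p"
    using rho k0 n1 s by (intro div_powr_mono) auto
  also have "\<dots> = t powr (2 * s) * (sqrt 2 / (1 - r)) powr ?p * (1 / norm (y, 1::real) powr ?p)"
  proof -
    have e1: "(\<kappa> * norm (y, 1::real)) powr ?p = (1-r) powr ?p / sqrt 2 powr ?p * norm (y, 1::real) powr ?p"
      using k0 n1 r by (simp add: \<kappa>_def powr_mult powr_divide)
    have e2: "(sqrt 2 / (1 - r)) powr ?p = sqrt 2 powr ?p / (1-r) powr ?p"
      using r by (simp add: powr_divide)
    have "(1-r) powr ?p > 0" "sqrt 2 powr ?p > 0" "norm (y, 1::real) powr ?p > 0" using r n1 by auto
    then show ?thesis unfolding e1 e2 by (simp add: field_simps)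
  qed
  finally show ?thesis .
qed

lemma Q_le_weight:
  assumes s: "s > 0"
  shows "1 / norm (y::'a::euclidean_space, 1::real) powr (real DIM('a) + 2 * s) \<le> 2 / Ls_weight s y"
proof -
  let ?p = "real DIM('a) + 2 * s"
  let ?\<nu> = "norm (y, 1::real)"
  have n1: "?\<nu> \<ge> 1" using norm_pair_pos[where z=y and t=1] by simp
  have a: "1 \<le> ?\<nu> powr ?p" using n1 s by (intro ge_one_powr_ge_zero) auto
  have b: "norm y powr ?p \<le> ?\<nu> powr ?p" using s by (intro powr_mono2) (auto simp: norm_pair_ge_fst)
  have "Ls_weight s y \<le> 2 * ?\<nu> powr ?p" unfolding Ls_weight_def using a b by simp
  moreover have "Ls_weight s y > 0" unfolding Ls_weight_def by (simp add: add_pos_nonneg)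
  ultimately have "2 / (2 * ?\<nu> powr ?p) \<le> 2 / Ls_weight s y"
    using a by (intro divide_left_mono) (auto intro!: mult_pos_pos)
  then show ?thesis using a by simp
qed

lemma P0_global:
  fixes x y :: "'a::euclidean_space"
  assumes t: "t > 0" and s: "s > 0"
  shows "P0 s (x,t) y \<le> t powr (2 * s) * (t powr (- (real DIM('a) + 2 * s)) + (1 + norm x / t) powr (real DIM('a) + 2 * s)) / Ls_weight s y"
proof -
  let ?p = "real DIM('a) + 2 * s"
  define \<rho> where "\<rho> = norm (x - y, t)"
  have rt: "\<rho> \<ge> t" using norm_pair_pos[where z="x - y" and t=t] t by (simp add: \<rho>_def)
  have r0: "\<rho> > 0" using rt t by simp
  have "norm y \<le> norm x + norm (x - y)" by (metis add_diff_cancel_left' diff_add_cancel norm_triangle_ineq4 norm_minus_commute add.commute norm_triangle_sub)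
  also have "\<dots> \<le> norm x + \<rho>" using norm_pair_ge_fst[where z="x - y" and t=t] by (simp add: \<rho>_def)
  also have "\<dots> \<le> \<rho> * (1 + norm x / t)"
  proof -
    have "norm x \<le> \<rho> * (norm x / t)" using rt t by (simp add: field_simps mult_right_mono)
    then show ?thesis by (simp add: algebra_simps)
  qed
  finally have yb: "norm y \<le> \<rho> * (1 + norm x / t)" .
  have w1: "norm y powr ?p \<le> \<rho> powr ?p * (1 + norm x / t) powr ?p"
    using yb s t r0 by (subst powr_mult[symmetric]) (auto intro!: powr_mono2)
  have w2: "1 \<le> \<rho> powr ?p * t powr (- ?p)"
  proof -
    have "t powr ?p \<le> \<rho> powr ?p" using rt t s by (intro powr_mono2) auto
    moreover have "\<rho> powr ?p * t powr (- ?p) = \<rho> powr ?p / t powr ?p" by (simp add: powr_minus[of t] divide_inverse del: minus_add_distrib)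
    moreover have "t powr ?p > 0" using t by simp
    ultimately show ?thesis by simp
  qed
  have W: "Ls_weight s y \<le> \<rho> powr ?p * (t powr (- ?p) + (1 + norm x / t) powr ?p)"
    unfolding Ls_weight_def using w1 w2 by (simp add: algebra_simps)
  have wpos: "Ls_weight s y > 0" unfolding Ls_weight_def by (simp add: add_pos_nonneg)
  have "P0 s (x,t) y * Ls_weight s y \<le> t powr (2 * s) / \<rho> powr ?p * (\<rho> powr ?p * (t powr (- ?p) + (1 + norm x / t) powr ?p))"
    unfolding P0_def fst_conv snd_conv \<rho>_def[symmetric] using W by (intro mult_left_mono) auto
  also have "\<dots> = t powr (2 * s) * (t powr (- ?p) + (1 + norm x / t) powr ?p)"
    using r0 by simp
  finally show ?thesis using wpos by (simp add: field_simps)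
qed

lemma P0_near:
  fixes x y :: "'a::euclidean_space"
  assumes t: "t > 0" and s: "s > 0" and y: "y \<in> ball x t"
  shows "P0 s (x,t) y \<ge> t powr (2 * s) / (sqrt 2 * t) powr (real DIM('a) + 2 * s)"
proof -
  let ?p = "real DIM('a) + 2 * s"
  have "norm (x - y) < t" using y by (simp add: dist_norm)
  then have "(norm (x - y))\<^sup>2 \<le> t\<^sup>2" using t by (simp add: power_mono)
  then have "(norm (x - y))\<^sup>2 + t\<^sup>2 \<le> 2 * t\<^sup>2" by simp
  then have "norm (x - y, t) \<le> sqrt (2 * t\<^sup>2)" by (simp add: norm_Pair real_sqrt_le_mono)
  also have "\<dots> = sqrt 2 * t" using t by (simp add: real_sqrt_mult)
  finally have le: "norm (x - y, t) \<le> sqrt 2 * t" .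
  have pos: "norm (x - y, t) > 0" using norm_pair_pos[where z="x - y" and t=t] t by (simp only: abs_of_pos[OF t])
  show ?thesis unfolding P0_def fst_conv snd_conv using le pos s
    by (intro div_powr_mono) auto
qed



lemma weight_pos: "Ls_weight s y > 0"
  unfolding Ls_weight_def by (simp add: add_pos_nonneg)

lemma weight_nz[simp]: "Ls_weight s y \<noteq> 0"
  using weight_pos[of s y] by simp

lemma weight_abs[simp]: "\<bar>Ls_weight s y\<bar> = Ls_weight s y"
  using weight_pos[of s y] by simp

lemma weight_meas[measurable]: "Ls_weight s \<in> borel_measurable borel"
  unfolding Ls_weight_def[abs_def] by measurable

lemma u_meas:
  assumes "in_Ls s u"
  shows "u \<in> borel_measurable borel"
proof -
  have [measurable]: "(\<lambda>x. u x / Ls_weight s x) \<in> borel_measurable borel"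
    using assms unfolding in_Ls_def by (simp add: borel_measurable_integrable)
  have "(\<lambda>x. u x / Ls_weight s x * Ls_weight s x) \<in> borel_measurable borel" by measurable
  moreover have "(\<lambda>x. u x / Ls_weight s x * Ls_weight s x) = u"
    by auto
  ultimately show ?thesis by simp
qed

lemma absu_int:
  assumes "in_Ls s u"
  shows "integrable lborel (\<lambda>y. \<bar>u y\<bar> / Ls_weight s y)"
proof -
  have "integrable lborel (\<lambda>y. \<bar>u y / Ls_weight s y\<bar>)"
    using assms unfolding in_Ls_def by (rule integrable_abs)
  moreover have "\<And>y. \<bar>u y / Ls_weight s y\<bar> = \<bar>u y\<bar> / Ls_weight s y"
    by simp
  ultimately show ?thesis by simp
qed

lemma posu_int:
  assumes "in_Ls s u"
  shows "integrable lborel (\<lambda>y. pos_part u y / Ls_weight s y)"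
proof (rule Bochner_Integration.integrable_bound[OF absu_int[OF assms]])
  have [measurable]: "u \<in> borel_measurable borel" using u_meas[OF assms] .
  show "(\<lambda>y. pos_part u y / Ls_weight s y) \<in> borel_measurable lborel"
    unfolding pos_part_def by measurable
  show "AE x in lborel. norm (pos_part u x / Ls_weight s x) \<le> norm (\<bar>u x\<bar> / Ls_weight s x)"
  proof (intro AE_I2)
    fix x
    have "max (u x) 0 / Ls_weight s x \<le> \<bar>u x\<bar> / Ls_weight s x"
      using weight_pos[of s x] by (intro divide_right_mono) auto
    then show "norm (pos_part u x / Ls_weight s x) \<le> norm (\<bar>u x\<bar> / Ls_weight s x)"
      by (simp add: pos_part_def)
  qed
qed

lemma P0_le_t:
  assumes t: "t > 0" and s: "s > 0"
  shows "P0 s (x::'a::euclidean_space, t) y \<le> t powr (2 * s) / t powr (real DIM('a) + 2 * s)"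
  unfolding P0_def fst_conv snd_conv using t s norm_pair_pos[where z="x - y" and t=t]
  by (intro div_powr_mono) auto

lemma Pker_meas[measurable]: "(\<lambda>y. Pker s X y) \<in> borel_measurable borel"
  unfolding Pker_def by measurable

lemma Pker_meas'[measurable]: "Pker s X \<in> borel_measurable borel"
  using Pker_meas[of s X] by simp

lemma ball_sets[measurable]: "ball (c::'a::euclidean_space) r \<in> sets borel"
  by simp

lemma Pu_int:
  fixes x :: "'a::euclidean_space"
  assumes s: "s > 0" and t: "t > 0" and u: "in_Ls s u"
  shows "integrable lborel (\<lambda>y. Pker s (x,t) y * u y)"
proof -
  let ?p = "real DIM('a) + 2 * s"
  define K where "K = d_const s TYPE('a) * (t powr (2 * s) * (t powr (- ?p) + (1 + norm x / t) powr ?p))"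
  have K0: "K \<ge> 0" unfolding K_def using d_pos[OF s, where 'a='a] by simp
  have [measurable]: "u \<in> borel_measurable borel" using u_meas[OF u] .
  show ?thesis
  proof (rule Bochner_Integration.integrable_bound)
    show "integrable lborel (\<lambda>y. K * (\<bar>u y\<bar> / Ls_weight s y))"
      by (rule integrable_mult_right) (rule absu_int[OF u])
    show "(\<lambda>y. Pker s (x,t) y * u y) \<in> borel_measurable lborel" by measurable
    show "AE y in lborel. norm (Pker s (x,t) y * u y) \<le> norm (K * (\<bar>u y\<bar> / Ls_weight s y))"
    proof (intro AE_I2)
      fix y
      have "Pker s (x,t) y \<le> K / Ls_weight s y"
        unfolding Pker_def K_def using P0_global[OF t s, of x y] d_pos[OF s, where 'a='a]
        by (simp add: mult_left_mono times_divide_eq_right[symmetric] del: times_divide_eq_right)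
      then have "Pker s (x,t) y * \<bar>u y\<bar> \<le> K / Ls_weight s y * \<bar>u y\<bar>"
        by (intro mult_right_mono) auto
      then show "norm (Pker s (x,t) y * u y) \<le> norm (K * (\<bar>u y\<bar> / Ls_weight s y))"
        using Pker_nonneg[OF s, of "(x,t)" y] K0 weight_pos[of s y]
        by (simp add: abs_mult)
    qed
  qed
qed

lemma Pexp_int:
  fixes x :: "'a::euclidean_space"
  assumes s: "s > 0" and t: "t > 0" and u: "in_Ls s u"
    and e: "set_integrable lborel (ball 0 1) (\<lambda>x. exp (\<alpha> * u x))"
  shows "integrable lborel (\<lambda>y. indicator (ball 0 1) y * Pker s (x,t) y * exp (\<alpha> * u y))"
proof -
  let ?p = "real DIM('a) + 2 * s"
  define K where "K = d_const s TYPE('a) * (t powr (2 * s) / t powr ?p)"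
  have K0: "K \<ge> 0" unfolding K_def using d_pos[OF s, where 'a='a] by simp
  have [measurable]: "u \<in> borel_measurable borel" using u_meas[OF u] .
  show ?thesis
  proof (rule Bochner_Integration.integrable_bound)
    show "integrable lborel (\<lambda>y. K * (indicator (ball 0 1) y * exp (\<alpha> * u y)))"
      using e unfolding set_integrable_def by simp
    show "(\<lambda>y. indicator (ball 0 1) y * Pker s (x,t) y * exp (\<alpha> * u y)) \<in> borel_measurable lborel" by measurable
    show "AE y in lborel. norm (indicator (ball 0 1) y * Pker s (x,t) y * exp (\<alpha> * u y)) \<le> norm (K * (indicator (ball 0 1) y * exp (\<alpha> * u y)))"
    proof (intro AE_I2)
      fix y
      have "Pker s (x,t) y \<le> K"
        unfolding Pker_def K_def using P0_le_t[OF t s, of x y] d_pos[OF s, where 'a='a]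
        by (intro mult_left_mono) auto
      then show "norm (indicator (ball 0 1) y * Pker s (x,t) y * exp (\<alpha> * u y)) \<le> norm (K * (indicator (ball 0 1) y * exp (\<alpha> * u y)))"
        using Pker_nonneg[OF s, of "(x,t)" y] K0
        by (auto simp: abs_mult indicator_def)
    qed
  qed
qed

lemma PB_int:
  fixes x :: "'a::euclidean_space"
  assumes s: "s > 0" and t: "t > 0"
  shows "integrable lborel (\<lambda>y. indicator (ball 0 1) y * Pker s (x,t) y)"
proof -
  let ?p = "real DIM('a) + 2 * s"
  define K where "K = d_const s TYPE('a) * (t powr (2 * s) / t powr ?p)"
  have K0: "K \<ge> 0" unfolding K_def using d_pos[OF s, where 'a='a] by simp
  show ?thesis
  proof (rule Bochner_Integration.integrable_bound)
    show "integrable lborel (\<lambda>y. K * indicator (ball (0::'a) 1) y)"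
      by (intro integrable_mult_right integrable_real_indicator) (auto simp: emeasure_lborel_ball_finite[unfolded infinity_ennreal_def])
    show "(\<lambda>y. indicator (ball 0 1) y * Pker s (x,t) y) \<in> borel_measurable lborel" by measurable
    show "AE y in lborel. norm (indicator (ball 0 1) y * Pker s (x,t) y) \<le> norm (K * indicator (ball (0::'a) 1) y)"
    proof (intro AE_I2)
      fix y
      have "Pker s (x,t) y \<le> K"
        unfolding Pker_def K_def using P0_le_t[OF t s, of x y] d_pos[OF s, where 'a='a]
        by (intro mult_left_mono) auto
      then show "norm (indicator (ball 0 1) y * Pker s (x,t) y) \<le> norm (K * indicator (ball (0::'a) 1) y)"
        using Pker_nonneg[OF s, of "(x,t)" y] K0
        by (auto simp: abs_mult indicator_def)
    qed
  qed
qed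



lemma jensen_exp:
  fixes k f :: "'b \<Rightarrow> real"
  assumes k0: "\<And>y. k y \<ge> 0" and ik: "integrable M k" and ikf: "integrable M (\<lambda>y. k y * f y)"
    and ike: "integrable M (\<lambda>y. k y * exp (\<alpha> * f y))" and m: "integral\<^sup>L M k > 0"
  shows "exp (\<alpha> * ((\<integral>y. k y * f y \<partial>M) / integral\<^sup>L M k)) \<le> (\<integral>y. k y * exp (\<alpha> * f y) \<partial>M) / integral\<^sup>L M k"
proof -
  define mm where "mm = integral\<^sup>L M k"
  define b where "b = (\<integral>y. k y * f y \<partial>M) / mm"
  define c1 where "c1 = exp (\<alpha> * b) * (1 - \<alpha> * b)"
  define c2 where "c2 = exp (\<alpha> * b) * \<alpha>"
  have pt: "c1 * k y + c2 * (k y * f y) \<le> k y * exp (\<alpha> * f y)" for y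
  proof -
    have "1 + \<alpha> * (f y - b) \<le> exp (\<alpha> * (f y - b))" by (rule exp_ge_add_one_self)
    then have "exp (\<alpha> * b) * (1 + \<alpha> * (f y - b)) \<le> exp (\<alpha> * b) * exp (\<alpha> * (f y - b))"
      by (intro mult_left_mono) auto
    also have "\<dots> = exp (\<alpha> * f y)" by (simp flip: exp_add add: algebra_simps)
    finally have "exp (\<alpha> * b) * (1 + \<alpha> * (f y - b)) \<le> exp (\<alpha> * f y)" .
    then have "k y * (exp (\<alpha> * b) * (1 + \<alpha> * (f y - b))) \<le> k y * exp (\<alpha> * f y)"
      using k0[of y] by (intro mult_left_mono) auto
    then show ?thesis by (simp add: c1_def c2_def algebra_simps)
  qed
  have "(\<integral>y. c1 * k y + c2 * (k y * f y) \<partial>M) \<le> (\<integral>y. k y * exp (\<alpha> * f y) \<partial>M)"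
    using ik ikf ike pt by (intro integral_mono) auto
  moreover have "(\<integral>y. c1 * k y + c2 * (k y * f y) \<partial>M) = c1 * mm + c2 * (\<integral>y. k y * f y \<partial>M)"
    using ik ikf by (simp add: mm_def)
  moreover have "c1 * mm + c2 * (\<integral>y. k y * f y \<partial>M) = exp (\<alpha> * b) * mm"
    using m by (simp add: c1_def c2_def b_def mm_def field_simps)
  ultimately have "exp (\<alpha> * b) * mm \<le> (\<integral>y. k y * exp (\<alpha> * f y) \<partial>M)" by simp
  then show ?thesis using m by (simp add: b_def mm_def field_simps)
qed



lemma m_le_1:
  fixes x :: "'a::euclidean_space"
  assumes s: "s > 0" and t: "t > 0"
  shows "(\<integral>y. indicator (ball 0 1) y * Pker s (x,t) y \<partial>lborel) \<le> 1"
proof -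
  have "ennreal (\<integral>y. indicator (ball 0 1) y * Pker s (x,t) y \<partial>lborel) = (\<integral>\<^sup>+y. ennreal (indicator (ball 0 1) y * Pker s (x,t) y) \<partial>lborel)"
    using PB_int[OF s t, of x] Pker_nonneg[OF s, of "(x,t)"]
    by (intro nn_integral_eq_integral[symmetric]) auto
  also have "\<dots> \<le> (\<integral>\<^sup>+y. ennreal (Pker s (x,t) y) \<partial>lborel)"
    using Pker_nonneg[OF s, of "(x,t)"]
    by (intro nn_integral_mono) (auto simp: indicator_def)
  also have "\<dots> = 1" by (rule Pker_norm_y[OF s t])
  finally show ?thesis by simp
qed

lemma m_lower:
  fixes x :: "'a::euclidean_space"
  assumes s: "s > 0" and t: "t > 0" and \<rho>: "0 < \<rho>" "\<rho> \<le> t" and sub: "ball x \<rho> \<subseteq> ball 0 1"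
  shows "d_const s TYPE('a) * (t powr (2 * s) / (sqrt 2 * t) powr (real DIM('a) + 2 * s)) * (unit_ball_vol (real DIM('a)) * \<rho> ^ DIM('a))
     \<le> (\<integral>y. indicator (ball 0 1) y * Pker s (x,t) y \<partial>lborel)"
proof -
  define K where "K = d_const s TYPE('a) * (t powr (2 * s) / (sqrt 2 * t) powr (real DIM('a) + 2 * s))"
  have "(\<integral>y. K * indicator (ball x \<rho>) y \<partial>lborel) \<le> (\<integral>y. indicator (ball 0 1) y * Pker s (x,t) y \<partial>lborel)"
  proof (rule integral_mono)
    show "integrable lborel (\<lambda>y. K * indicator (ball x \<rho>) y)"
      by (intro integrable_mult_right integrable_real_indicator) (auto simp: emeasure_lborel_ball_finite[unfolded infinity_ennreal_def])
    show "integrable lborel (\<lambda>y. indicator (ball 0 1) y * Pker s (x,t) y)" by (rule PB_int[OF s t])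
    fix y :: 'a
    show "K * indicator (ball x \<rho>) y \<le> indicator (ball 0 1) y * Pker s (x,t) y"
    proof (cases "y \<in> ball x \<rho>")
      case True
      then have "y \<in> ball x t" using \<rho> by auto
      then have "K \<le> Pker s (x,t) y"
        unfolding K_def Pker_def using P0_near[OF t s, of y x] d_pos[OF s, where 'a='a]
        by (intro mult_left_mono) auto
      then show ?thesis using True sub by auto
    next
      case False
      then show ?thesis using Pker_nonneg[OF s, of "(x,t)" y] by (auto simp: indicator_def)
    qed
  qed
  moreover have "(\<integral>y. K * indicator (ball x \<rho>) y \<partial>lborel) = K * (unit_ball_vol (real DIM('a)) * \<rho> ^ DIM('a))"
    using \<rho> by (simp add: content_ball)
  moreover have "Henstock_Kurzweil_Integration.content (ball x \<rho>) = unit_ball_vol (real DIM('a)) * \<rho> ^ DIM('a)"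
    using \<rho> content_ball[of \<rho> x] by simp
  ultimately show ?thesis by (simp add: K_def)
qed

lemma m_pos:
  fixes x :: "'a::euclidean_space"
  assumes s: "s > 0" and t: "t > 0" and r: "r < 1" and x: "norm x \<le> r"
  shows "0 < (\<integral>y. indicator (ball 0 1) y * Pker s (x,t) y \<partial>lborel)"
proof -
  define \<rho> where "\<rho> = min t (1 - r)"
  have \<rho>: "0 < \<rho>" "\<rho> \<le> t" using t r by (auto simp: \<rho>_def)
  have sub: "ball x \<rho> \<subseteq> ball 0 1"
  proof
    fix y assume "y \<in> ball x \<rho>"
    then have "norm (y - x) < \<rho>" by (simp add: dist_norm norm_minus_commute)
    moreover have "norm y \<le> norm x + norm (y - x)" by (metis add.commute diff_add_cancel norm_triangle_ineq)
    ultimately show "y \<in> ball 0 1" using x by (simp add: \<rho>_def)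
  qed
  have "0 < d_const s TYPE('a) * (t powr (2 * s) / (sqrt 2 * t) powr (real DIM('a) + 2 * s)) * (unit_ball_vol (real DIM('a)) * \<rho> ^ DIM('a))"
    using d_pos[OF s, where 'a='a] t \<rho> by (intro mult_pos_pos divide_pos_pos) auto
  also have "\<dots> \<le> (\<integral>y. indicator (ball 0 1) y * Pker s (x,t) y \<partial>lborel)" by (rule m_lower[OF s t \<rho> sub])
  finally show ?thesis .
qed



lemma exp_powr_eq: "exp (z::real) powr m = exp (m * z)"
  by (simp add: powr_def)

lemma ext_bound:
  fixes x :: "'a::euclidean_space"
  assumes s: "s > 0" and t: "t > 0" and r: "0 \<le> r" "r < 1" and x: "norm x \<le> r"
    and u: "in_Ls s u" and a: "\<alpha> > 0"
    and e: "set_integrable lborel (ball 0 1) (\<lambda>x. exp (\<alpha> * u x))"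
  shows "exp (\<alpha> * ext s u (x,t)) \<le>
    ((\<integral>y. indicator (ball 0 1) y * Pker s (x,t) y * exp (\<alpha> * u y) \<partial>lborel) / (\<integral>y. indicator (ball 0 1) y * Pker s (x,t) y \<partial>lborel))
      powr (\<integral>y. indicator (ball 0 1) y * Pker s (x,t) y \<partial>lborel)
    * exp (\<alpha> * (d_const s TYPE('a) * 2 * (sqrt 2 / (1 - r)) powr (real DIM('a) + 2 * s) * t powr (2 * s) * Ls_norm s (pos_part u)))"
proof -
  let ?p = "real DIM('a) + 2 * s"
  let ?B = "ball (0::'a) 1"
  define m where "m = (\<integral>y. indicator ?B y * Pker s (x,t) y \<partial>lborel)"
  define g where "g = (\<integral>y. indicator ?B y * Pker s (x,t) y * exp (\<alpha> * u y) \<partial>lborel)"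
  define Kh where "Kh = d_const s TYPE('a) * 2 * (sqrt 2 / (1 - r)) powr ?p * t powr (2 * s)"
  define N where "N = Ls_norm s (pos_part u)"
  define I1 where "I1 = (\<integral>y. indicator ?B y * (Pker s (x,t) y * u y) \<partial>lborel)"
  define I2 where "I2 = (\<integral>y. (1 - indicator ?B y) * (Pker s (x,t) y * u y) \<partial>lborel)"
  have [measurable]: "u \<in> borel_measurable borel" using u_meas[OF u] .
  have iP: "integrable lborel (\<lambda>y. Pker s (x,t) y * u y)" by (rule Pu_int[OF s t u])
  have i1: "integrable lborel (\<lambda>y. indicator ?B y * (Pker s (x,t) y * u y))"
    using integrable_mult_indicator[OF _ iP, of ?B] by simp
  have i2: "integrable lborel (\<lambda>y. (1 - indicator ?B y) * (Pker s (x,t) y * u y))"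
  proof -
    have "integrable lborel (\<lambda>y. Pker s (x,t) y * u y - indicator ?B y * (Pker s (x,t) y * u y))"
      using iP i1 by (rule Bochner_Integration.integrable_diff)
    then show ?thesis by (simp add: algebra_simps)
  qed
  have ext_eq: "ext s u (x,t) = I1 + I2"
  proof -
    have "ext s u (x,t) = (\<integral>y. indicator ?B y * (Pker s (x,t) y * u y) + (1 - indicator ?B y) * (Pker s (x,t) y * u y) \<partial>lborel)"
      unfolding ext_def by (intro Bochner_Integration.integral_cong) (auto simp: algebra_simps)
    also have "\<dots> = I1 + I2" unfolding I1_def I2_def using i1 i2 by (rule Bochner_Integration.integral_add)
    finally show ?thesis .
  qed
  have pos_int: "integrable lborel (\<lambda>y. pos_part u y / Ls_weight s y)" by (rule posu_int[OF u])
  have I2_le: "I2 \<le> Kh * N"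
  proof -
    have "I2 \<le> (\<integral>y. Kh * (pos_part u y / Ls_weight s y) \<partial>lborel)"
      unfolding I2_def
    proof (rule integral_mono)
      show "integrable lborel (\<lambda>y. (1 - indicator ?B y) * (Pker s (x,t) y * u y))" by (rule i2)
      show "integrable lborel (\<lambda>y. Kh * (pos_part u y / Ls_weight s y))" using pos_int by (rule integrable_mult_right)
      fix y :: 'a
      have Kh0: "Kh \<ge> 0" unfolding Kh_def using d_pos[OF s, where 'a='a] r by simp
      have pp: "pos_part u y \<ge> 0" "u y \<le> pos_part u y" by (auto simp: pos_part_def)
      show "(1 - indicator ?B y) * (Pker s (x,t) y * u y) \<le> Kh * (pos_part u y / Ls_weight s y)"
      proof (cases "y \<in> ?B")
        case True
        then show ?thesis using Kh0 pp weight_pos[of s y] by simp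
      next
        case False
        then have y1: "norm y \<ge> 1" by simp
        have "Pker s (x,t) y \<le> d_const s TYPE('a) * (t powr (2 * s) * (sqrt 2 / (1 - r)) powr ?p * (1 / norm (y, 1::real) powr ?p))"
          unfolding Pker_def using P0_far[OF t r x y1 s] d_pos[OF s, where 'a='a]
          by (intro mult_left_mono) auto
        also have "\<dots> \<le> d_const s TYPE('a) * (t powr (2 * s) * (sqrt 2 / (1 - r)) powr ?p * (2 / Ls_weight s y))"
          using Q_le_weight[OF s, of y] d_pos[OF s, where 'a='a]
          by (intro mult_left_mono) auto
        also have "\<dots> = Kh / Ls_weight s y" by (simp add: Kh_def)
        finally have Pk: "Pker s (x,t) y \<le> Kh / Ls_weight s y" .
        have "Pker s (x,t) y * u y \<le> Pker s (x,t) y * pos_part u y"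
          using pp Pker_nonneg[OF s, of "(x,t)" y] by (intro mult_left_mono) auto
        also have "\<dots> \<le> Kh / Ls_weight s y * pos_part u y"
          using Pk pp by (intro mult_right_mono) auto
        finally show ?thesis using False by simp
      qed
    qed
    also have "\<dots> = Kh * (\<integral>y. pos_part u y / Ls_weight s y \<partial>lborel)"
      by (rule integral_mult_right_zero)
    also have "(\<integral>y. pos_part u y / Ls_weight s y \<partial>lborel) = N"
      unfolding N_def Ls_norm_def by (intro Bochner_Integration.integral_cong) (auto simp: pos_part_def)
    finally show ?thesis by simp
  qed
  have m0: "m > 0" unfolding m_def by (rule m_pos[OF s t r(2) x])
  have jen: "exp (\<alpha> * (I1 / m)) \<le> g / m"
  proof -
    have "exp (\<alpha> * ((\<integral>y. (indicator ?B y * Pker s (x,t) y) * u y \<partial>lborel) / integral\<^sup>L lborel (\<lambda>y. indicator ?B y * Pker s (x,t) y)))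
       \<le> (\<integral>y. (indicator ?B y * Pker s (x,t) y) * exp (\<alpha> * u y) \<partial>lborel) / integral\<^sup>L lborel (\<lambda>y. indicator ?B y * Pker s (x,t) y)"
    proof (rule jensen_exp)
      show "\<And>y. 0 \<le> indicator ?B y * Pker s (x,t) y" using Pker_nonneg[OF s, of "(x,t)"] by (auto intro!: mult_nonneg_nonneg)
      show "integrable lborel (\<lambda>y. indicator ?B y * Pker s (x,t) y)" by (rule PB_int[OF s t])
      show "integrable lborel (\<lambda>y. indicator ?B y * Pker s (x,t) y * u y)" using i1 by (simp add: mult.assoc)
      show "integrable lborel (\<lambda>y. indicator ?B y * Pker s (x,t) y * exp (\<alpha> * u y))" by (rule Pexp_int[OF s t u e])
      show "0 < integral\<^sup>L lborel (\<lambda>y. indicator ?B y * Pker s (x,t) y)" using m0 by (simp add: m_def)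
    qed
    then show ?thesis by (simp add: I1_def g_def m_def mult.assoc)
  qed
  have "exp (\<alpha> * I1) = exp (\<alpha> * (I1 / m)) powr m"
    using m0 by (simp add: exp_powr_eq)
  also have "\<dots> \<le> (g / m) powr m"
    using jen m0 by (intro powr_mono2) auto
  finally have e1: "exp (\<alpha> * I1) \<le> (g / m) powr m" .
  have e2: "exp (\<alpha> * I2) \<le> exp (\<alpha> * (Kh * N))"
    using I2_le a by (simp add: mult_left_mono)
  have "exp (\<alpha> * ext s u (x,t)) = exp (\<alpha> * I1) * exp (\<alpha> * I2)"
    by (simp add: ext_eq distrib_left exp_add)
  also have "\<dots> \<le> (g / m) powr m * exp (\<alpha> * (Kh * N))"
    using e1 e2 by (intro mult_mono) auto
  finally show ?thesis by (simp add: g_def m_def Kh_def N_def mult.assoc)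
qed



lemma S1:
  fixes g m :: real
  assumes m: "0 < m" "m \<le> 1" and g: "g \<ge> 0"
  shows "(g / m) powr m \<le> exp 1 * g powr m"
proof -
  have "ln (1 / m) \<le> 1 / m - 1" using m by (intro ln_le_minus_one) auto
  then have "- ln m \<le> 1 / m - 1" using m by (simp add: ln_div)
  then have "m * (- ln m) \<le> m * (1 / m - 1)" using m by (intro mult_left_mono) auto
  then have "- (m * ln m) \<le> 1" using m by (simp add: algebra_simps)
  then have "exp (-1) \<le> m powr m" using m by (simp add: powr_def)
  moreover have "exp (-1::real) > 0" by simp
  ultimately have "1 / m powr m \<le> exp 1" using m
    by (simp add: exp_minus field_simps)
  then have "g powr m * (1 / m powr m) \<le> g powr m * exp 1" by (intro mult_left_mono) auto
  then show ?thesis using m g by (simp add: powr_divide field_simps)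
qed

lemma S2:
  fixes g m c :: real
  assumes c: "0 < c" "c \<le> m" "m \<le> 1" and g: "g \<ge> 0"
  shows "g powr m \<le> g + g powr c"
proof (cases "g \<ge> 1")
  case True
  then have "g powr m \<le> g powr 1" using c by (intro powr_mono) auto
  moreover have "0 \<le> g powr c" by simp
  ultimately show ?thesis using g True by (simp only: powr_one)
next
  case False
  then have "g powr m \<le> g powr c" using c g by (intro powr_mono') auto
  then show ?thesis using g by simp
qed

lemma S3:
  fixes g m :: real
  assumes m: "0 < m" "m \<le> 1" and g: "g \<ge> 0"
  shows "g powr m \<le> 1 + g"
proof (cases "g \<ge> 1")
  case True
  then have "g powr m \<le> g powr 1" using m by (intro powr_mono) auto
  then show ?thesis using g True by simp
next
  case False
  then have "g powr m \<le> 1 powr m" using m g by (intro powr_mono2) auto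
  then show ?thesis using g by simp
qed

lemma S4:
  fixes g c A :: real
  assumes c: "0 < c" "c \<le> 1" and A: "A > 0" and g: "g \<ge> 0"
  shows "g powr c \<le> A powr c + c * A powr (c - 1) * g"
proof (cases "g = 0")
  case True
  then show ?thesis by simp
next
  case False
  then have gp: "g > 0" using g by simp
  have "(g / A) powr c * 1 powr (1 - c) \<le> c * (g / A) + (1 - c) * 1"
    using c A gp by (intro Youngs_inequality_0) auto
  then have "(g / A) powr c \<le> c * (g / A) + (1 - c)" by simp
  then have "A powr c * (g / A) powr c \<le> A powr c * (c * (g / A) + (1 - c))"
    by (intro mult_left_mono) auto
  also have "\<dots> = c * (A powr c / A) * g + (1 - c) * A powr c"
    by (simp add: algebra_simps)
  also have "A powr c / A = A powr (c - 1)" using A by (simp add: powr_diff)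
  finally have "A powr c * (g / A) powr c \<le> c * A powr (c - 1) * g + (1 - c) * A powr c" .
  moreover have "A powr c * (g / A) powr c = g powr c" using A gp by (simp add: powr_divide)
  moreover have "(1 - c) * A powr c \<le> A powr c" using c A by (simp add: algebra_simps)
  ultimately show ?thesis by linarith
qed



lemma Pker_measB[measurable]:
  "(\<lambda>p. Pker s (fst p) (snd p :: 'a::euclidean_space)) \<in> borel_measurable borel"
  unfolding Pker_def P0_def by (simp only: borel_prod[symmetric]) measurable

lemma Pker_measX[measurable]:
  "(\<lambda>X. Pker s X (y :: 'a::euclidean_space)) \<in> borel_measurable borel"
  unfolding Pker_def P0_def by (simp only: borel_prod[symmetric]) measurable

lemma Pker_measX2[measurable]:
  "(\<lambda>X. Pker s X (y :: 'a::euclidean_space)) \<in> borel_measurable (lborel \<Otimes>\<^sub>M lborel)"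
  by (simp only: lborel_prod) simp

lemma Pker_meas2:
  "(\<lambda>p. Pker s (fst p) (snd p :: 'a::euclidean_space)) \<in> borel_measurable (lborel \<Otimes>\<^sub>M lborel)"
  by (simp only: lborel_prod) measurable

lemma W_eq:
  assumes s: "s < 1" and T: "T \<ge> 0"
  shows "(\<integral>\<^sup>+t. ennreal (t powr (1 - 2 * s)) * indicator {0..T} t \<partial>lborel) = ennreal (T powr (2 - 2 * s) / (2 - 2 * s))"
proof -
  have "((\<lambda>t. t powr (1 - 2 * s)) has_integral (T powr ((1 - 2 * s) + 1) / ((1 - 2 * s) + 1))) {0..T}"
    using s T by (intro has_integral_powr_from_0) auto
  then have "(\<integral>\<^sup>+t. ennreal (t powr (1 - 2 * s)) * indicator {0..T} t \<partial>lborel) = ennreal (T powr ((1 - 2 * s) + 1) / ((1 - 2 * s) + 1))"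
    by (intro nn_integral_has_integral_lebesgue') auto
  moreover have "(1 - 2 * s) + 1 = 2 - 2 * s" by simp
  ultimately show ?thesis by simp
qed

lemma inner_x:
  fixes y :: "'a::euclidean_space"
  assumes s: "0 < s" "s < 1" and T: "T \<ge> 0"
  shows "(\<integral>\<^sup>+X. indicator (cball (0::'a) r \<times> {0..T}) X * ennreal (snd X powr (1 - 2 * s)) * ennreal (Pker s X y) \<partial>lborel)
     \<le> ennreal (T powr (2 - 2 * s) / (2 - 2 * s))"
proof -
  have "(\<integral>\<^sup>+X. indicator (cball (0::'a) r \<times> {0..T}) X * ennreal (snd X powr (1 - 2 * s)) * ennreal (Pker s X y) \<partial>lborel)
      = (\<integral>\<^sup>+X. indicator (cball (0::'a) r \<times> {0..T}) X * ennreal (snd X powr (1 - 2 * s)) * ennreal (Pker s X y) \<partial>(lborel \<Otimes>\<^sub>M lborel))"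
    by (simp only: lborel_prod)
  also have "\<dots> = (\<integral>\<^sup>+t. (\<integral>\<^sup>+x. indicator (cball (0::'a) r \<times> {0..T}) (x,t) * ennreal (t powr (1 - 2 * s)) * ennreal (Pker s (x,t) y) \<partial>lborel) \<partial>lborel)"
  proof -
    have meas: "(\<lambda>X. indicator (cball (0::'a) r \<times> {0..T}) X * ennreal (snd X powr (1 - 2 * s)) * ennreal (Pker s X y)) \<in> borel_measurable (lborel \<Otimes>\<^sub>M lborel)"
      by measurable
    show ?thesis using lborel_pair.nn_integral_snd[OF meas] by simp
  qed
  also have "\<dots> \<le> (\<integral>\<^sup>+t. ennreal (t powr (1 - 2 * s)) * indicator {0..T} t \<partial>lborel)"
  proof (intro nn_integral_mono)
    fix t :: real
    show "(\<integral>\<^sup>+x. indicator (cball (0::'a) r \<times> {0..T}) (x,t) * ennreal (t powr (1 - 2 * s)) * ennreal (Pker s (x,t) y) \<partial>lborel)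
        \<le> ennreal (t powr (1 - 2 * s)) * indicator {0..T} t"
    proof (cases "t \<in> {0..T}")
      case True
      have "(\<integral>\<^sup>+x. indicator (cball (0::'a) r \<times> {0..T}) (x,t) * ennreal (t powr (1 - 2 * s)) * ennreal (Pker s (x,t) y) \<partial>lborel)
          \<le> (\<integral>\<^sup>+x. ennreal (t powr (1 - 2 * s)) * ennreal (Pker s (x,t) y) \<partial>lborel)"
        by (intro nn_integral_mono) (auto simp: indicator_def)
      also have "\<dots> = ennreal (t powr (1 - 2 * s)) * (\<integral>\<^sup>+x. ennreal (Pker s (x,t) y) \<partial>lborel)"
        by (rule nn_integral_cmult) measurable
      also have "\<dots> \<le> ennreal (t powr (1 - 2 * s)) * 1"
        using True by (intro mult_left_mono Pker_norm_x_le[OF s(1)]) auto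
      finally show ?thesis using True by simp
    next
      case False
      have "\<And>x. indicator (cball (0::'a) r \<times> {0..T}) (x,t) = (0::ennreal)" using False by (simp add: indicator_def)
      then show ?thesis using False by simp
    qed
  qed
  also have "\<dots> = ennreal (T powr (2 - 2 * s) / (2 - 2 * s))" by (rule W_eq[OF s(2) T])
  finally show ?thesis .
qed



lemma A_nn:
  assumes e: "set_integrable lborel (ball 0 1) (\<lambda>x. exp (\<alpha> * u x))"
  shows "(\<integral>\<^sup>+y. ennreal (indicator (ball (0::'a::euclidean_space) 1) y * exp (\<alpha> * u y)) \<partial>lborel) = ennreal (expL1 \<alpha> u)"
proof -
  have "integrable lborel (\<lambda>y. indicator (ball (0::'a) 1) y * exp (\<alpha> * u y))"
    using e unfolding set_integrable_def by simp
  then have "(\<integral>\<^sup>+y. ennreal (indicator (ball (0::'a) 1) y * exp (\<alpha> * u y)) \<partial>lborel) = ennreal (\<integral>y. indicator (ball (0::'a) 1) y * exp (\<alpha> * u y) \<partial>lborel)"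
    by (intro nn_integral_eq_integral) auto
  then show ?thesis unfolding expL1_def set_lebesgue_integral_def by simp
qed

lemma G_int:
  fixes u :: "'a::euclidean_space \<Rightarrow> real"
  assumes s: "0 < s" "s < 1" and u: "in_Ls s u" and e: "set_integrable lborel (ball 0 1) (\<lambda>x. exp (\<alpha> * u x))"
    and T: "T \<ge> 0"
  shows "(\<integral>\<^sup>+X. indicator (cball (0::'a) r \<times> {0..T}) X * ennreal (snd X powr (1 - 2 * s)) *
      (\<integral>\<^sup>+y. ennreal (indicator (ball 0 1) y * Pker s X y * exp (\<alpha> * u y)) \<partial>lborel) \<partial>lborel)
    \<le> ennreal (T powr (2 - 2 * s) / (2 - 2 * s) * expL1 \<alpha> u)"
proof -
  have [measurable]: "u \<in> borel_measurable borel" using u_meas[OF u] .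
  note [measurable] = Pker_meas2
  let ?B = "ball (0::'a) 1"
  let ?W = "T powr (2 - 2 * s) / (2 - 2 * s)"
  let ?F = "\<lambda>X y. indicator (cball (0::'a) r \<times> {0..T}) X * ennreal (snd X powr (1 - 2 * s)) *
      ennreal (indicator ?B y * Pker s X y * exp (\<alpha> * u y))"
  define f1 where "f1 = (\<lambda>X. indicator (cball (0::'a) r \<times> {0..T}) X * ennreal (snd X powr (1 - 2 * s)))"
  have f1m[measurable]: "f1 \<in> borel_measurable (lborel::('a \<times> real) measure)"
    unfolding f1_def by (subst lborel_prod[symmetric]) measurable
  have "(\<lambda>p. f1 (fst p) * ennreal (indicator ?B (snd p) * Pker s (fst p) (snd p) * exp (\<alpha> * u (snd p)))) \<in> borel_measurable (lborel \<Otimes>\<^sub>M lborel)"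
    by measurable
  then have meas: "case_prod ?F \<in> borel_measurable (lborel \<Otimes>\<^sub>M lborel)"
    unfolding case_prod_beta f1_def .
  have "(\<integral>\<^sup>+X. indicator (cball (0::'a) r \<times> {0..T}) X * ennreal (snd X powr (1 - 2 * s)) *
      (\<integral>\<^sup>+y. ennreal (indicator ?B y * Pker s X y * exp (\<alpha> * u y)) \<partial>lborel) \<partial>lborel)
      = (\<integral>\<^sup>+X. (\<integral>\<^sup>+y. ?F X y \<partial>lborel) \<partial>lborel)"
    by (intro nn_integral_cong, subst nn_integral_cmult[symmetric]) (simp_all add: mult.assoc)
  also have "\<dots> = (\<integral>\<^sup>+y. (\<integral>\<^sup>+X. ?F X y \<partial>lborel) \<partial>lborel)"
    by (rule lborel_pair.Fubini'[OF meas, symmetric])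
  also have "\<dots> = (\<integral>\<^sup>+y. ennreal (indicator ?B y * exp (\<alpha> * u y)) *
       (\<integral>\<^sup>+X. indicator (cball (0::'a) r \<times> {0..T}) X * ennreal (snd X powr (1 - 2 * s)) * ennreal (Pker s X y) \<partial>lborel) \<partial>lborel)"
  proof (intro nn_integral_cong)
    fix y :: 'a
    have "?F X y = ennreal (indicator ?B y * exp (\<alpha> * u y)) *
       (indicator (cball (0::'a) r \<times> {0..T}) X * ennreal (snd X powr (1 - 2 * s)) * ennreal (Pker s X y))" for X
    proof -
      have "ennreal (indicator ?B y * Pker s X y * exp (\<alpha> * u y)) = ennreal (indicator ?B y * exp (\<alpha> * u y)) * ennreal (Pker s X y)"
        by (subst ennreal_mult'[symmetric]) (simp_all add: mult_ac)
      then show ?thesis by (simp add: mult_ac)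
    qed
    then have "(\<integral>\<^sup>+X. ?F X y \<partial>lborel) = (\<integral>\<^sup>+X. ennreal (indicator ?B y * exp (\<alpha> * u y)) *
       (indicator (cball (0::'a) r \<times> {0..T}) X * ennreal (snd X powr (1 - 2 * s)) * ennreal (Pker s X y)) \<partial>lborel)"
      by simp
    also have "\<dots> = ennreal (indicator ?B y * exp (\<alpha> * u y)) *
       (\<integral>\<^sup>+X. indicator (cball (0::'a) r \<times> {0..T}) X * ennreal (snd X powr (1 - 2 * s)) * ennreal (Pker s X y) \<partial>lborel)"
      by (rule nn_integral_cmult) (subst lborel_prod[symmetric], measurable)
    finally show "(\<integral>\<^sup>+X. ?F X y \<partial>lborel) = \<dots>" .
  qed
  also have "\<dots> \<le> (\<integral>\<^sup>+y. ennreal (indicator ?B y * exp (\<alpha> * u y)) * ennreal ?W \<partial>lborel)"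
    by (intro nn_integral_mono mult_left_mono inner_x[OF s T]) auto
  also have "\<dots> = (\<integral>\<^sup>+y. ennreal (indicator ?B y * exp (\<alpha> * u y)) \<partial>lborel) * ennreal ?W"
    by (rule nn_integral_multc) measurable
  also have "\<dots> = ennreal (expL1 \<alpha> u) * ennreal ?W"
    by (simp only: A_nn[OF e])
  also have "\<dots> = ennreal (?W * expL1 \<alpha> u)"
  proof -
    have "0 \<le> ?W" using s by simp
    then show ?thesis using ennreal_mult''[of ?W "expL1 \<alpha> u"] by (simp only: mult.commute)
  qed
  finally show ?thesis .
qed

lemma box_int:
  assumes s: "s < 1" and T: "T \<ge> 0" and r: "r \<ge> 0"
  shows "(\<integral>\<^sup>+X. indicator (cball (0::'a::euclidean_space) r \<times> {0..T}) X * ennreal (snd X powr (1 - 2 * s)) \<partial>lborel)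
     = ennreal (unit_ball_vol (real DIM('a)) * r ^ DIM('a) * (T powr (2 - 2 * s) / (2 - 2 * s)))"
proof -
  have meas: "(\<lambda>X. indicator (cball (0::'a) r \<times> {0..T}) X * ennreal (snd X powr (1 - 2 * s))) \<in> borel_measurable (lborel \<Otimes>\<^sub>M lborel)"
    by measurable
  have "(\<integral>\<^sup>+X. indicator (cball (0::'a) r \<times> {0..T}) X * ennreal (snd X powr (1 - 2 * s)) \<partial>lborel)
     = (\<integral>\<^sup>+X. indicator (cball (0::'a) r \<times> {0..T}) X * ennreal (snd X powr (1 - 2 * s)) \<partial>(lborel \<Otimes>\<^sub>M lborel))"
    by (simp only: lborel_prod)
  also have "\<dots> = (\<integral>\<^sup>+t. (\<integral>\<^sup>+x. indicator (cball (0::'a) r \<times> {0..T}) (x,t) * ennreal (snd (x,t) powr (1 - 2 * s)) \<partial>lborel) \<partial>lborel)"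
    by (rule lborel_pair.nn_integral_snd[OF meas, symmetric])
  also have "\<dots> = (\<integral>\<^sup>+t. emeasure lborel (cball (0::'a) r) * (ennreal (t powr (1 - 2 * s)) * indicator {0..T} t) \<partial>lborel)"
  proof (intro nn_integral_cong)
    fix t :: real
    have "(\<integral>\<^sup>+x. indicator (cball (0::'a) r \<times> {0..T}) (x,t) * ennreal (snd (x,t) powr (1 - 2 * s)) \<partial>lborel)
        = (\<integral>\<^sup>+x. (ennreal (t powr (1 - 2 * s)) * indicator {0..T} t) * indicator (cball (0::'a) r) x \<partial>lborel)"
      by (intro nn_integral_cong) (auto simp: indicator_def)
    also have "\<dots> = (ennreal (t powr (1 - 2 * s)) * indicator {0..T} t) * emeasure lborel (cball (0::'a) r)"
      by (rule nn_integral_cmult_indicator) simp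
    finally show "(\<integral>\<^sup>+x. indicator (cball (0::'a) r \<times> {0..T}) (x,t) * ennreal (snd (x,t) powr (1 - 2 * s)) \<partial>lborel)
        = emeasure lborel (cball (0::'a) r) * (ennreal (t powr (1 - 2 * s)) * indicator {0..T} t)"
      by (simp add: mult.commute)
  qed
  also have "\<dots> = emeasure lborel (cball (0::'a) r) * (\<integral>\<^sup>+t. ennreal (t powr (1 - 2 * s)) * indicator {0..T} t \<partial>lborel)"
    by (rule nn_integral_cmult) measurable
  also have "\<dots> = ennreal (unit_ball_vol (real DIM('a)) * r ^ DIM('a) * (T powr (2 - 2 * s) / (2 - 2 * s)))"
  proof -
    have w0: "0 \<le> T powr (2 - 2 * s) / (2 - 2 * s)" using s by simp
    have v0: "0 \<le> unit_ball_vol (real DIM('a)) * r ^ DIM('a)" using r by simp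
    have "emeasure lborel (cball (0::'a) r) = ennreal (unit_ball_vol (real DIM('a)) * r ^ DIM('a))"
      by (rule emeasure_cball) (rule r)
    moreover have "(\<integral>\<^sup>+t. ennreal (t powr (1 - 2 * s)) * indicator {0..T} t \<partial>lborel) = ennreal (T powr (2 - 2 * s) / (2 - 2 * s))"
      by (rule W_eq[OF s T])
    ultimately show ?thesis using ennreal_mult[OF v0 w0] by simp
  qed
  finally show ?thesis .
qed



lemma G_meas:
  fixes u :: "'a::euclidean_space \<Rightarrow> real"
  assumes [measurable]: "u \<in> borel_measurable borel"
  shows "(\<lambda>X. \<integral>\<^sup>+y. ennreal (indicator (ball (0::'a) 1) y * Pker s X y * exp (\<alpha> * u y)) \<partial>lborel) \<in> borel_measurable (lborel :: ('a \<times> real) measure)"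
proof -
  note [measurable] = Pker_meas2
  have "(\<lambda>p. ennreal (indicator (ball (0::'a) 1) (snd p) * Pker s (fst p) (snd p) * exp (\<alpha> * u (snd p)))) \<in> borel_measurable (lborel \<Otimes>\<^sub>M lborel)"
    by measurable
  then show ?thesis using lborel.borel_measurable_nn_integral[of "\<lambda>X y. ennreal (indicator (ball (0::'a) 1) y * Pker s X y * exp (\<alpha> * u y))" lborel]
    by (simp add: case_prod_beta)
qed

lemma G_eq:
  fixes x :: "'a::euclidean_space"
  assumes s: "s > 0" and t: "t > 0" and u: "in_Ls s u"
    and e: "set_integrable lborel (ball 0 1) (\<lambda>x. exp (\<alpha> * u x))"
  shows "(\<integral>\<^sup>+y. ennreal (indicator (ball (0::'a) 1) y * Pker s (x,t) y * exp (\<alpha> * u y)) \<partial>lborel)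
     = ennreal (\<integral>y. indicator (ball (0::'a) 1) y * Pker s (x,t) y * exp (\<alpha> * u y) \<partial>lborel)"
  using Pexp_int[OF s t u e, of x] Pker_nonneg[OF s, of "(x,t)"]
  by (intro nn_integral_eq_integral) (auto intro!: mult_nonneg_nonneg)

lemma final_bound:
  fixes u :: "'a::euclidean_space \<Rightarrow> real" and S :: "('a \<times> real) set"
  assumes s: "0 < s" "s < 1" and u: "in_Ls s u" and a: "\<alpha> > 0"
    and e: "set_integrable lborel (ball 0 1) (\<lambda>x. exp (\<alpha> * u x))"
    and r: "0 \<le> r" "r < 1" and T: "T \<ge> 0" and a1: "a1 \<ge> 0" and a0: "a0 \<ge> 0"
    and hS: "\<And>X. X \<in> S \<Longrightarrow> norm (fst X) \<le> r \<and> 0 \<le> snd X \<and> snd X \<le> T"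
    and hpt: "\<And>x t. (x,t) \<in> S \<Longrightarrow> t > 0 \<Longrightarrow>
        ((\<integral>y. indicator (ball 0 1) y * Pker s (x,t) y * exp (\<alpha> * u y) \<partial>lborel) / (\<integral>y. indicator (ball 0 1) y * Pker s (x,t) y \<partial>lborel))
          powr (\<integral>y. indicator (ball 0 1) y * Pker s (x,t) y \<partial>lborel)
        \<le> exp 1 * (a1 * (\<integral>y. indicator (ball 0 1) y * Pker s (x,t) y * exp (\<alpha> * u y) \<partial>lborel) + a0)"
  shows "(\<integral>\<^sup>+X. ennreal (indicator S X * wexp s \<alpha> u X) \<partial>lborel)
     \<le> ennreal (exp (\<alpha> * (d_const s TYPE('a) * 2 * (sqrt 2 / (1 - r)) powr (real DIM('a) + 2 * s) * T powr (2 * s) * \<bar>Ls_norm s (pos_part u)\<bar>)) * exp 1 *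
          (a1 * (T powr (2 - 2 * s) / (2 - 2 * s) * expL1 \<alpha> u) + a0 * (unit_ball_vol (real DIM('a)) * r ^ DIM('a) * (T powr (2 - 2 * s) / (2 - 2 * s)))))"
proof -
  let ?p = "real DIM('a) + 2 * s"
  let ?B = "ball (0::'a) 1"
  define Kc where "Kc = d_const s TYPE('a) * 2 * (sqrt 2 / (1 - r)) powr ?p"
  define N where "N = Ls_norm s (pos_part u)"
  define E where "E = exp (\<alpha> * (Kc * T powr (2 * s) * \<bar>N\<bar>))"
  define W where "W = T powr (2 - 2 * s) / (2 - 2 * s)"
  define V where "V = unit_ball_vol (real DIM('a)) * r ^ DIM('a)"
  define G where "G = (\<lambda>X. \<integral>\<^sup>+y. ennreal (indicator ?B y * Pker s X y * exp (\<alpha> * u y)) \<partial>lborel)"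
  define box where "box = cball (0::'a) r \<times> {0..T}"
  have [measurable]: "u \<in> borel_measurable borel" using u_meas[OF u] .
  have Gm[measurable]: "G \<in> borel_measurable lborel" unfolding G_def by (rule G_meas) simp
  have boxm[measurable]: "box \<in> sets lborel" unfolding box_def by (simp, intro borel_closed closed_Times) auto
  define h where "h = (\<lambda>X. indicator box X * ennreal (snd X powr (1 - 2 * s)))"
  have hm[measurable]: "h \<in> borel_measurable (lborel :: ('a \<times> real) measure)"
    unfolding h_def box_def by (subst lborel_prod[symmetric]) measurable
  have Kc0: "Kc \<ge> 0" unfolding Kc_def using d_pos[OF s(1), where 'a='a] by simp
  have E0: "E > 0" unfolding E_def by simp
  have pt: "ennreal (indicator S X * wexp s \<alpha> u X) \<le> ennreal (E * exp 1) * (h X * (ennreal a1 * G X + ennreal a0))" for X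
  proof (cases "X \<in> S")
    case False
    then show ?thesis by simp
  next
    case True
    obtain x t where X: "X = (x,t)" by (cases X)
    from hS[OF True] have x: "norm x \<le> r" and t0: "0 \<le> t" and tT: "t \<le> T" by (auto simp: X)
    have inbox: "X \<in> box" unfolding box_def X using x t0 tT by auto
    show ?thesis
    proof (cases "t = 0")
      case True
      then show ?thesis by (simp add: X wexp_def)
    next
      case False
      then have t: "t > 0" using t0 by simp
      define g where "g = (\<integral>y. indicator ?B y * Pker s (x,t) y * exp (\<alpha> * u y) \<partial>lborel)"
      define m where "m = (\<integral>y. indicator ?B y * Pker s (x,t) y \<partial>lborel)"
      have g0: "g \<ge> 0" unfolding g_def using Pker_nonneg[OF s(1), of "(x,t)"]
        by (intro integral_nonneg_AE) (auto intro!: mult_nonneg_nonneg)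
      have GX: "G X = ennreal g" unfolding G_def g_def X by (rule G_eq[OF s(1) t u e])
      have eb: "exp (\<alpha> * ext s u (x,t)) \<le> (g / m) powr m * exp (\<alpha> * (Kc * t powr (2 * s) * N))"
        using ext_bound[OF s(1) t r x u a e] by (simp add: g_def m_def Kc_def N_def mult.assoc)
      have "Kc * t powr (2 * s) * N \<le> Kc * T powr (2 * s) * \<bar>N\<bar>"
      proof -
        have "t powr (2 * s) * N \<le> t powr (2 * s) * \<bar>N\<bar>" by (intro mult_left_mono) auto
        also have "\<dots> \<le> T powr (2 * s) * \<bar>N\<bar>" using t tT s by (intro mult_right_mono powr_mono2) auto
        finally show ?thesis using Kc0 by (simp add: mult.assoc mult_left_mono)
      qed
      then have "exp (\<alpha> * (Kc * t powr (2 * s) * N)) \<le> E" unfolding E_def using a by simp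
      then have "exp (\<alpha> * ext s u (x,t)) \<le> (g / m) powr m * E"
        using eb by (meson mult_left_mono order_trans powr_ge_zero)
      also have "\<dots> \<le> exp 1 * (a1 * g + a0) * E"
        using hpt[OF True[unfolded X] t] E0 by (intro mult_right_mono) (auto simp: g_def m_def)
      finally have ee: "exp (\<alpha> * ext s u (x,t)) \<le> exp 1 * (a1 * g + a0) * E" .
      have "wexp s \<alpha> u X \<le> t powr (1 - 2 * s) * (exp 1 * (a1 * g + a0) * E)"
        unfolding wexp_def X fst_conv snd_conv using ee by (intro mult_left_mono) auto
      then have "ennreal (indicator S X * wexp s \<alpha> u X) \<le> ennreal (E * exp 1 * (t powr (1 - 2 * s) * (a1 * g + a0)))"
        using True by (intro ennreal_leI) (simp add: mult_ac)
      also have "\<dots> = ennreal (E * exp 1) * (ennreal (t powr (1 - 2 * s)) * (ennreal a1 * ennreal g + ennreal a0))"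
      proof -
        have "ennreal (a1 * g + a0) = ennreal a1 * ennreal g + ennreal a0"
          using a1 a0 g0 by (simp add: ennreal_plus ennreal_mult)
        then show ?thesis using E0 a1 a0 g0 by (simp add: ennreal_mult del: ennreal_plus)
      qed
      also have "\<dots> = ennreal (E * exp 1) * (h X * (ennreal a1 * G X + ennreal a0))"
        using inbox GX by (simp add: X h_def)
      finally show ?thesis .
    qed
  qed
  have "(\<integral>\<^sup>+X. ennreal (indicator S X * wexp s \<alpha> u X) \<partial>lborel)
      \<le> (\<integral>\<^sup>+X. ennreal (E * exp 1) * (h X * (ennreal a1 * G X + ennreal a0)) \<partial>lborel)"
    by (intro nn_integral_mono pt)
  also have "\<dots> = ennreal (E * exp 1) * (\<integral>\<^sup>+X. ennreal a1 * (h X * G X)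
        + ennreal a0 * h X \<partial>lborel)"
    by (subst nn_integral_cmult) (measurable, simp add: algebra_simps)
  also have "\<dots> = ennreal (E * exp 1) * (ennreal a1 * (\<integral>\<^sup>+X. h X * G X \<partial>lborel)
        + ennreal a0 * (\<integral>\<^sup>+X. h X \<partial>lborel))"
    by (subst nn_integral_add) (measurable, simp add: nn_integral_cmult)
  also have "\<dots> \<le> ennreal (E * exp 1) * (ennreal a1 * ennreal (W * expL1 \<alpha> u) + ennreal a0 * ennreal (V * W))"
  proof -
    have "(\<integral>\<^sup>+X. h X * G X \<partial>lborel) \<le> ennreal (W * expL1 \<alpha> u)"
      unfolding h_def box_def G_def W_def by (rule G_int[OF s u e T])
    moreover have "(\<integral>\<^sup>+X. h X \<partial>lborel) = ennreal (V * W)"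
      unfolding h_def box_def V_def W_def by (rule box_int[OF s(2) T r(1)])
    ultimately show ?thesis by (intro mult_left_mono add_mono) auto
  qed
  also have "\<dots> = ennreal (E * exp 1 * (a1 * (W * expL1 \<alpha> u) + a0 * (V * W)))"
  proof -
    have W0: "0 \<le> W" unfolding W_def using s by simp
    have V0: "0 \<le> V" unfolding V_def using r by simp
    have A0: "0 \<le> expL1 \<alpha> u"
      unfolding expL1_def set_lebesgue_integral_def by (intro integral_nonneg_AE) (auto simp: indicator_def)
    from W0 V0 A0 have "ennreal (a1 * (W * expL1 \<alpha> u) + a0 * (V * W)) = ennreal a1 * (ennreal W * ennreal (expL1 \<alpha> u)) + ennreal a0 * (ennreal V * ennreal W)"
      using a1 a0 by (simp add: ennreal_plus ennreal_mult)
    moreover have "0 \<le> a1 * (W * expL1 \<alpha> u) + a0 * (V * W)" using W0 V0 A0 a1 a0 by simp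
    then have "ennreal (E * exp 1 * (a1 * (W * expL1 \<alpha> u) + a0 * (V * W))) = ennreal E * ennreal (exp 1) * ennreal (a1 * (W * expL1 \<alpha> u) + a0 * (V * W))"
      using E0 by (simp add: ennreal_mult del: ennreal_plus)
    moreover have "ennreal (E * exp 1) = ennreal E * ennreal (exp 1)" using E0 by (simp add: ennreal_mult)
    ultimately show ?thesis using W0 V0 A0 by (simp add: ennreal_mult del: ennreal_plus)
  qed
  finally show ?thesis by (simp add: E_def Kc_def N_def W_def V_def mult.assoc)
qed



lemma A_pos:
  fixes u :: "'a::euclidean_space \<Rightarrow> real"
  assumes u: "in_Ls s u" and e: "set_integrable lborel (ball 0 1) (\<lambda>x. exp (\<alpha> * u x))"
  shows "expL1 \<alpha> u > 0"
proof (rule ccontr)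
  assume "\<not> expL1 \<alpha> u > 0"
  moreover have "0 \<le> expL1 \<alpha> u"
    unfolding expL1_def set_lebesgue_integral_def by (intro integral_nonneg_AE) (auto simp: indicator_def)
  ultimately have "expL1 \<alpha> u = 0" by simp
  then have "(\<integral>\<^sup>+y. ennreal (indicator (ball (0::'a) 1) y * exp (\<alpha> * u y)) \<partial>lborel) = 0"
    using A_nn[OF e] by simp
  moreover have [measurable]: "u \<in> borel_measurable borel" using u_meas[OF u] .
  ultimately have "AE y in lborel. ennreal (indicator (ball (0::'a) 1) y * exp (\<alpha> * u y)) = 0"
    by (subst (asm) nn_integral_0_iff_AE) auto
  then have "AE y in lborel. y \<notin> ball (0::'a) 1"
    by (rule AE_mp) (auto intro!: AE_I2 simp: indicator_def)
  then have "ball (0::'a) 1 \<in> null_sets lborel"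
    by (subst AE_iff_null_sets) auto
  then have "emeasure lborel (ball (0::'a) 1) = 0" by auto
  then show False using unit_ball_vol_pos[of "real DIM('a)"] by (simp add: emeasure_ball)
qed

lemma m_near1:
  fixes x :: "'a::euclidean_space"
  assumes s: "s > 0" and t: "t > 0" and x: "norm x \<le> 1/2"
  shows "1 - (sqrt 2 / (1 - 1/2)) powr (real DIM('a) + 2 * s) * t powr (2 * s) \<le> (\<integral>y. indicator (ball 0 1) y * Pker s (x,t) y \<partial>lborel)"
proof -
  let ?p = "real DIM('a) + 2 * s"
  let ?B = "ball (0::'a) 1"
  define \<kappa> where "\<kappa> = (sqrt 2 / (1 - 1/2)) powr ?p"
  define c0 where "c0 = (\<integral>z. P0 s (0::'a,1) z \<partial>lborel)"
  have c0p: "c0 > 0" unfolding c0_def by (rule c0_pos[OF s])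
  have d: "d_const s TYPE('a) = 1 / c0" unfolding d_const_def c0_def by simp
  have "1 = (\<integral>\<^sup>+y. ennreal (Pker s (x,t) y) \<partial>lborel)" using Pker_norm_y[OF s t, of x] by simp
  also have "\<dots> = (\<integral>\<^sup>+y. ennreal (indicator ?B y * Pker s (x,t) y) + ennreal ((1 - indicator ?B y) * Pker s (x,t) y) \<partial>lborel)"
    using Pker_nonneg[OF s, of "(x,t)"]
    by (intro nn_integral_cong) (auto simp: indicator_def)
  also have "\<dots> = (\<integral>\<^sup>+y. ennreal (indicator ?B y * Pker s (x,t) y) \<partial>lborel) + (\<integral>\<^sup>+y. ennreal ((1 - indicator ?B y) * Pker s (x,t) y) \<partial>lborel)"
    by (rule nn_integral_add) measurable
  also have "(\<integral>\<^sup>+y. ennreal (indicator ?B y * Pker s (x,t) y) \<partial>lborel) = ennreal (\<integral>y. indicator ?B y * Pker s (x,t) y \<partial>lborel)"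
    using PB_int[OF s t, of x] Pker_nonneg[OF s, of "(x,t)"]
    by (intro nn_integral_eq_integral) (auto intro!: mult_nonneg_nonneg)
  also have "(\<integral>\<^sup>+y. ennreal ((1 - indicator ?B y) * Pker s (x,t) y) \<partial>lborel) \<le> (\<integral>\<^sup>+y. ennreal (d_const s TYPE('a) * \<kappa> * t powr (2 * s)) * ennreal (P0 s (0::'a,1) y) \<partial>lborel)"
  proof (intro nn_integral_mono)
    fix y :: 'a
    show "ennreal ((1 - indicator ?B y) * Pker s (x,t) y) \<le> ennreal (d_const s TYPE('a) * \<kappa> * t powr (2 * s)) * ennreal (P0 s (0::'a,1) y)"
    proof (cases "y \<in> ?B")
      case True
      then show ?thesis by simp
    next
      case False
      then have y1: "norm y \<ge> 1" by simp
      have "Pker s (x,t) y \<le> d_const s TYPE('a) * (t powr (2 * s) * \<kappa> * (1 / norm (y, 1::real) powr ?p))"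
        unfolding Pker_def \<kappa>_def using P0_far[OF t _ _ x y1 s] d_pos[OF s, where 'a='a]
        by (intro mult_left_mono) auto
      also have "\<dots> = d_const s TYPE('a) * \<kappa> * t powr (2 * s) * P0 s (0::'a,1) y"
        by (simp add: P0_01)
      finally have "(1 - indicator ?B y) * Pker s (x,t) y \<le> d_const s TYPE('a) * \<kappa> * t powr (2 * s) * P0 s (0::'a,1) y"
        using False by simp
      then show ?thesis
        using d_pos[OF s, where 'a='a] P0_nonneg[of s "(0::'a,1)" y] by (subst ennreal_mult[symmetric]) (auto simp: \<kappa>_def intro!: ennreal_leI)
    qed
  qed
  also have "\<dots> = ennreal (d_const s TYPE('a) * \<kappa> * t powr (2 * s)) * ennreal c0"
    by (subst nn_integral_cmult) (simp_all add: c0_def c0_nn[OF s])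
  also have "\<dots> = ennreal (\<kappa> * t powr (2 * s))"
    using c0p d_pos[OF s, where 'a='a] by (simp add: d \<kappa>_def flip: ennreal_mult)
  finally have "ennreal 1 \<le> ennreal ((\<integral>y. indicator ?B y * Pker s (x,t) y \<partial>lborel) + \<kappa> * t powr (2 * s))"
    using m_pos[OF s t _ x] \<kappa>_def by (subst ennreal_plus) (auto simp: add_left_mono)
  then have "1 \<le> (\<integral>y. indicator ?B y * Pker s (x,t) y \<partial>lborel) + \<kappa> * t powr (2 * s)"
    using m_pos[OF s t _ x] by (subst (asm) ennreal_le_iff) (auto simp: \<kappa>_def)
  then show ?thesis by (simp add: \<kappa>_def)
qed



definition Cst :: "real \<Rightarrow> real \<Rightarrow> real \<Rightarrow> 'a::euclidean_space itself \<Rightarrow> real" where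
  "Cst s \<alpha> N _ = exp (\<alpha> * (d_const s TYPE('a) * 2 * (sqrt 2 / (1 - 1/2)) powr (real DIM('a) + 2 * s) * (1/2) powr (2 * s) * \<bar>N\<bar>))
     * exp 1 * ((1/2) powr (2 - 2 * s) / (2 - 2 * s)) * (2 + unit_ball_vol (real DIM('a)) * (1/2) ^ DIM('a))"

lemma Cst_pos: "s < 1 \<Longrightarrow> Cst s \<alpha> N TYPE('a::euclidean_space) > 0"
  unfolding Cst_def by (intro mult_pos_pos add_pos_nonneg divide_pos_pos) auto

lemma main_C:
  fixes u :: "'a::euclidean_space \<Rightarrow> real" and S :: "('a \<times> real) set"
  assumes s: "0 < s" "s < 1" and u: "in_Ls s u" and a: "\<alpha> > 0"
    and e: "set_integrable lborel (ball 0 1) (\<lambda>x. exp (\<alpha> * u x))"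
    and c: "0 < c" "c \<le> 1"
    and hS: "\<And>X. X \<in> S \<Longrightarrow> norm (fst X) \<le> 1/2 \<and> 0 \<le> snd X \<and> snd X \<le> 1/2"
    and hm: "\<And>x t. (x,t) \<in> S \<Longrightarrow> t > 0 \<Longrightarrow> c \<le> (\<integral>y. indicator (ball 0 1) y * Pker s (x,t) y \<partial>lborel)"
  shows "(\<integral>X\<in>S. wexp s \<alpha> u X \<partial>lborel) \<le> Cst s \<alpha> (Ls_norm s (pos_part u)) TYPE('a) * (expL1 \<alpha> u + expL1 \<alpha> u powr c)"
proof -
  define A where "A = expL1 \<alpha> u"
  have A0: "A > 0" unfolding A_def by (rule A_pos[OF u e])
  define a1 where "a1 = 1 + c * A powr (c - 1)"
  define a0 where "a0 = A powr c"
  have a1: "a1 \<ge> 0" unfolding a1_def using c by simp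
  have a0: "a0 \<ge> 0" unfolding a0_def by simp
  have hpt: "((\<integral>y. indicator (ball 0 1) y * Pker s (x,t) y * exp (\<alpha> * u y) \<partial>lborel) / (\<integral>y. indicator (ball 0 1) y * Pker s (x,t) y \<partial>lborel))
          powr (\<integral>y. indicator (ball 0 1) y * Pker s (x,t) y \<partial>lborel)
        \<le> exp 1 * (a1 * (\<integral>y. indicator (ball 0 1) y * Pker s (x,t) y * exp (\<alpha> * u y) \<partial>lborel) + a0)"
    if xt: "(x,t) \<in> S" and t: "t > 0" for x t
  proof -
    define g where "g = (\<integral>y. indicator (ball (0::'a) 1) y * Pker s (x,t) y * exp (\<alpha> * u y) \<partial>lborel)"
    define m where "m = (\<integral>y. indicator (ball (0::'a) 1) y * Pker s (x,t) y \<partial>lborel)"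
    have g0: "g \<ge> 0" unfolding g_def using Pker_nonneg[OF s(1), of "(x,t)"]
      by (intro integral_nonneg_AE) (auto intro!: mult_nonneg_nonneg)
    have m1: "m \<le> 1" unfolding m_def by (rule m_le_1[OF s(1) t])
    have mc: "c \<le> m" unfolding m_def by (rule hm[OF xt t])
    have "(g / m) powr m \<le> exp 1 * g powr m" using S1[of m g] m1 mc c g0 by simp
    also have "\<dots> \<le> exp 1 * (g + g powr c)" using S2[OF c(1) mc m1 g0] by simp
    also have "\<dots> \<le> exp 1 * (g + (A powr c + c * A powr (c - 1) * g))" using S4[OF c A0 g0] by simp
    also have "\<dots> = exp 1 * (a1 * g + a0)" by (simp add: a1_def a0_def algebra_simps)
    finally show ?thesis by (simp add: g_def m_def)
  qed
  have fb: "(\<integral>\<^sup>+X. ennreal (indicator S X * wexp s \<alpha> u X) \<partial>lborel)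
     \<le> ennreal (exp (\<alpha> * (d_const s TYPE('a) * 2 * (sqrt 2 / (1 - 1/2)) powr (real DIM('a) + 2 * s) * (1/2) powr (2 * s) * \<bar>Ls_norm s (pos_part u)\<bar>)) * exp 1 *
          (a1 * ((1/2) powr (2 - 2 * s) / (2 - 2 * s) * expL1 \<alpha> u) + a0 * (unit_ball_vol (real DIM('a)) * (1/2) ^ DIM('a) * ((1/2) powr (2 - 2 * s) / (2 - 2 * s)))))"
    by (rule final_bound[OF s u a e _ _ _ a1 a0 hS hpt]) auto
  define E where "E = exp (\<alpha> * (d_const s TYPE('a) * 2 * (sqrt 2 / (1 - 1/2)) powr (real DIM('a) + 2 * s) * (1/2) powr (2 * s) * \<bar>Ls_norm s (pos_part u)\<bar>)) * exp 1"
  define W where "W = (1/2::real) powr (2 - 2 * s) / (2 - 2 * s)"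
  define V where "V = unit_ball_vol (real DIM('a)) * (1/2::real) ^ DIM('a)"
  have E0: "E > 0" unfolding E_def by simp
  have W0: "W > 0" unfolding W_def using s by simp
  have V0: "V \<ge> 0" unfolding V_def by simp
  have AA: "A powr (c - 1) * A = A powr c" using A0 by (simp add: powr_diff field_simps)
  have "a1 * (W * A) + a0 * (V * W) = W * (A + c * A powr c + V * A powr c)"
    unfolding a1_def a0_def using AA by (simp add: algebra_simps)
  also have "\<dots> \<le> W * ((2 + V) * (A + A powr c))"
  proof -
    have "A \<le> (2 + V) * A" using A0 V0 by simp
    moreover have "c * A powr c + V * A powr c \<le> (2 + V) * A powr c" using c by (simp add: algebra_simps mult_right_mono)
    ultimately show ?thesis using W0 by (intro mult_left_mono) (auto simp: algebra_simps)
  qed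
  finally have le: "E * (a1 * (W * A) + a0 * (V * W)) \<le> E * (W * ((2 + V) * (A + A powr c)))"
    using E0 by (intro mult_left_mono) auto
  have "(\<integral>X\<in>S. wexp s \<alpha> u X \<partial>lborel) = (\<integral>X. indicator S X * wexp s \<alpha> u X \<partial>lborel)"
    unfolding set_lebesgue_integral_def by simp
  also have "\<dots> \<le> E * (W * ((2 + V) * (A + A powr c)))"
  proof (rule integral_real_bounded)
    show "0 \<le> E * (W * ((2 + V) * (A + A powr c)))" using E0 W0 V0 A0 by simp
    have "(\<integral>\<^sup>+X. ennreal (indicator S X * wexp s \<alpha> u X) \<partial>lborel) \<le> ennreal (E * (a1 * (W * A) + a0 * (V * W)))"
      using fb by (simp add: E_def W_def V_def A_def mult.assoc)
    also have "\<dots> \<le> ennreal (E * (W * ((2 + V) * (A + A powr c))))" using le by (rule ennreal_leI)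
    finally show "(\<integral>\<^sup>+X. ennreal (indicator S X * wexp s \<alpha> u X) \<partial>lborel) \<le> ennreal (E * (W * ((2 + V) * (A + A powr c))))" .
  qed
  also have "\<dots> = Cst s \<alpha> (Ls_norm s (pos_part u)) TYPE('a) * (expL1 \<alpha> u + expL1 \<alpha> u powr c)"
    unfolding Cst_def E_def W_def V_def A_def by (simp add: mult_ac)
  finally show ?thesis .
qed



lemma m_lower_t:
  fixes x :: "'a::euclidean_space"
  assumes s: "s > 0" and t: "t > 0" and sub: "ball x t \<subseteq> ball 0 1"
  shows "d_const s TYPE('a) * unit_ball_vol (real DIM('a)) / sqrt 2 powr (real DIM('a) + 2 * s)
     \<le> (\<integral>y. indicator (ball 0 1) y * Pker s (x,t) y \<partial>lborel)"
proof -
  let ?p = "real DIM('a) + 2 * s"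
  have eq: "t powr (2 * s) / (sqrt 2 * t) powr ?p * (unit_ball_vol (real DIM('a)) * t ^ DIM('a))
      = unit_ball_vol (real DIM('a)) / sqrt 2 powr ?p"
  proof -
    have "(sqrt 2 * t) powr ?p = sqrt 2 powr ?p * (t ^ DIM('a) * t powr (2 * s))"
      using t by (simp add: powr_mult powr_add powr_realpow)
    then show ?thesis using t by (simp add: field_simps)
  qed
  have "d_const s TYPE('a) * (unit_ball_vol (real DIM('a)) / sqrt 2 powr ?p) \<le> (\<integral>y. indicator (ball 0 1) y * Pker s (x,t) y \<partial>lborel)"
    using m_lower[OF s t t order.refl sub] by (simp only: mult.assoc eq)
  then show ?thesis by simp
qed

lemma ext_meas:
  fixes u :: "'a::euclidean_space \<Rightarrow> real"
  assumes u: "in_Ls s u"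
  shows "ext s u \<in> borel_measurable (lborel :: ('a \<times> real) measure)"
proof -
  have [measurable]: "u \<in> borel_measurable borel" using u_meas[OF u] .
  note [measurable] = Pker_meas2
  have "(\<lambda>p. Pker s (fst p) (snd p) * u (snd p)) \<in> borel_measurable ((lborel :: ('a \<times> real) measure) \<Otimes>\<^sub>M lborel)"
    by measurable
  then have "(\<lambda>X. \<integral>y. Pker s X y * u y \<partial>lborel) \<in> borel_measurable (lborel :: ('a \<times> real) measure)"
    using lborel.borel_measurable_lebesgue_integral[of "\<lambda>X y. Pker s X y * u y" lborel]
    by (simp add: case_prod_beta)
  then show ?thesis unfolding ext_def[abs_def] .
qed

lemma part1:
  fixes u :: "'a::euclidean_space \<Rightarrow> real" and K :: "('a \<times> real) set"
  assumes s: "0 < s" "s < 1" and u: "in_Ls s u" and a: "\<alpha> > 0"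
    and e: "set_integrable lborel (ball 0 1) (\<lambda>x. exp (\<alpha> * u x))"
    and K: "compact K" "K \<subseteq> ball 0 1 \<times> {0..}"
  shows "set_integrable lborel K (wexp s \<alpha> u)"
proof (cases "K = {}")
  case True
  then show ?thesis by (simp add: set_integrable_def)
next
  case False
  have "compact ((\<lambda>X. norm (fst X)) ` K)"
    using K(1) by (intro compact_continuous_image continuous_intros)
  then obtain r where r: "r \<in> (\<lambda>X. norm (fst X)) ` K" and rmax: "\<forall>v\<in>(\<lambda>X. norm (fst X)) ` K. v \<le> r"
    using compact_attains_sup[of "(\<lambda>X. norm (fst X)) ` K"] False by blast
  have r1: "r < 1" "0 \<le> r" using r K(2) by auto
  obtain B where B: "\<forall>X\<in>K. norm X \<le> B" using compact_imp_bounded[OF K(1)] by (auto simp: bounded_iff)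
  define T where "T = max B 0"
  have hS: "norm (fst X) \<le> r \<and> 0 \<le> snd X \<and> snd X \<le> T" if "X \<in> K" for X
  proof -
    have "norm (fst X) \<le> r" using rmax that by auto
    moreover have "0 \<le> snd X" using K(2) that by auto
    moreover have "snd X \<le> T"
    proof -
      have "snd X \<le> norm X"
        using norm_pair_pos[where z="fst X" and t="snd X"] by simp
      then show ?thesis using B that by (auto simp: T_def)
    qed
    ultimately show ?thesis by simp
  qed
  have hpt: "((\<integral>y. indicator (ball 0 1) y * Pker s (x,t) y * exp (\<alpha> * u y) \<partial>lborel) / (\<integral>y. indicator (ball 0 1) y * Pker s (x,t) y \<partial>lborel))
          powr (\<integral>y. indicator (ball 0 1) y * Pker s (x,t) y \<partial>lborel)
        \<le> exp 1 * (1 * (\<integral>y. indicator (ball 0 1) y * Pker s (x,t) y * exp (\<alpha> * u y) \<partial>lborel) + 1)"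
    if xt: "(x,t) \<in> K" and t: "t > 0" for x t
  proof -
    define g where "g = (\<integral>y. indicator (ball (0::'a) 1) y * Pker s (x,t) y * exp (\<alpha> * u y) \<partial>lborel)"
    define m where "m = (\<integral>y. indicator (ball (0::'a) 1) y * Pker s (x,t) y \<partial>lborel)"
    have g0: "g \<ge> 0" unfolding g_def using Pker_nonneg[OF s(1), of "(x,t)"]
      by (intro integral_nonneg_AE) (auto intro!: mult_nonneg_nonneg)
    have m1: "m \<le> 1" unfolding m_def by (rule m_le_1[OF s(1) t])
    have x: "norm x \<le> r" using hS[OF xt] by simp
    have m0: "0 < m" unfolding m_def by (rule m_pos[OF s(1) t r1(1) x])
    have "(g / m) powr m \<le> exp 1 * g powr m" using S1[OF m0 m1 g0] .
    also have "\<dots> \<le> exp 1 * (1 + g)" using S3[OF m0 m1 g0] by simp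
    finally show ?thesis by (simp add: g_def m_def add.commute)
  qed
  have fb: "(\<integral>\<^sup>+X. ennreal (indicator K X * wexp s \<alpha> u X) \<partial>lborel) \<le> ennreal (exp (\<alpha> * (d_const s TYPE('a) * 2 * (sqrt 2 / (1 - r)) powr (real DIM('a) + 2 * s) * T powr (2 * s) * \<bar>Ls_norm s (pos_part u)\<bar>)) * exp 1 *
          (1 * (T powr (2 - 2 * s) / (2 - 2 * s) * expL1 \<alpha> u) + 1 * (unit_ball_vol (real DIM('a)) * r ^ DIM('a) * (T powr (2 - 2 * s) / (2 - 2 * s)))))"
    by (rule final_bound[OF s u a e r1(2) r1(1) _ _ _ hS hpt]) (auto simp: T_def)
  define h1 where "h1 = (\<lambda>X::'a \<times> real. snd X powr (1 - 2 * s))"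
  have h1m[measurable]: "h1 \<in> borel_measurable lborel"
    unfolding h1_def by (subst lborel_prod[symmetric]) measurable
  have em[measurable]: "ext s u \<in> borel_measurable (lborel :: ('a \<times> real) measure)" by (rule ext_meas[OF u])
  have Km[measurable]: "K \<in> sets lborel" using K(1) by (simp add: compact_imp_closed)
  have wm: "(\<lambda>X. indicator K X *\<^sub>R wexp s \<alpha> u X) \<in> borel_measurable lborel"
  proof -
    have "(\<lambda>X. indicator K X *\<^sub>R (h1 X * exp (\<alpha> * ext s u X))) \<in> borel_measurable lborel" by measurable
    then show ?thesis by (simp add: wexp_def h1_def)
  qed
  have wpos: "wexp s \<alpha> u X \<ge> 0" for X unfolding wexp_def by simp
  show ?thesis unfolding set_integrable_def
  proof (rule integrableI_bounded[OF wm])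
    have "(\<integral>\<^sup>+X. ennreal (norm (indicator K X *\<^sub>R wexp s \<alpha> u X)) \<partial>lborel) = (\<integral>\<^sup>+X. ennreal (indicator K X * wexp s \<alpha> u X) \<partial>lborel)"
      using wpos by (intro nn_integral_cong) (auto simp: indicator_def)
    also have "\<dots> < \<infinity>" using fb by (rule le_less_trans) simp
    finally show "(\<integral>\<^sup>+X. ennreal (norm (indicator K X *\<^sub>R wexp s \<alpha> u X)) \<partial>lborel) < \<infinity>" .
  qed
qed



lemma part2_inner:
  fixes u :: "'a::euclidean_space \<Rightarrow> real"
  assumes s: "0 < s" "s < 1" and a: "\<alpha> > 0" and u: "in_Ls s u" and e: "set_integrable lborel (ball 0 1) (\<lambda>x. exp (\<alpha> * u x))"
    and \<delta>: "0 < \<delta>" "\<delta> \<le> 1" "\<delta> \<le> d_const s TYPE('a) * unit_ball_vol (real DIM('a)) / sqrt 2 powr (real DIM('a) + 2 * s)"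
  shows "(\<integral>X\<in>Dhalf (1/2). wexp s \<alpha> u X \<partial>lborel) \<le> Cst s \<alpha> (Ls_norm s (pos_part u)) TYPE('a) * (expL1 \<alpha> u + expL1 \<alpha> u powr \<delta>)"
proof -
  have hS: "norm (fst X) \<le> 1/2 \<and> 0 \<le> snd X \<and> snd X \<le> 1/2" if "X \<in> Dhalf (1/2)" for X :: "'a \<times> real"
  proof -
    have X: "norm X < 1/2" "snd X \<ge> 0" using that by (auto simp: Dhalf_def)
    have "norm (fst X) \<le> norm X" using norm_pair_ge_fst[where z="fst X" and t="snd X"] by simp
    moreover have "snd X \<le> norm X" using norm_pair_pos[where z="fst X" and t="snd X"] by simp
    ultimately show ?thesis using X by simp
  qed
  have hm: "\<delta> \<le> (\<integral>y. indicator (ball 0 1) y * Pker s (x::'a,t) y \<partial>lborel)"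
    if xt: "(x,t) \<in> Dhalf (1/2)" and t: "t > 0" for x t
  proof -
    have nx: "norm x < 1/2" and tt: "t < 1/2"
    proof -
      have "norm (x,t) < 1/2" using xt by (simp add: Dhalf_def)
      moreover have "norm x \<le> norm (x,t)" by (rule norm_pair_ge_fst)
      moreover have "t \<le> norm (x,t)" using norm_pair_pos[where z=x and t=t] t by simp
      ultimately show "norm x < 1/2" "t < 1/2" by auto
    qed
    have sub: "ball x t \<subseteq> ball 0 1"
    proof
      fix y assume "y \<in> ball x t"
      then have "norm (y - x) < t" by (simp add: dist_norm norm_minus_commute)
      moreover have "norm y \<le> norm x + norm (y - x)" by (metis add.commute diff_add_cancel norm_triangle_ineq)
      ultimately show "y \<in> ball 0 1" using nx tt by simp
    qed
    have "d_const s TYPE('a) * unit_ball_vol (real DIM('a)) / sqrt 2 powr (real DIM('a) + 2 * s) \<le> (\<integral>y. indicator (ball 0 1) y * Pker s (x,t) y \<partial>lborel)"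
      by (rule m_lower_t[OF s(1) t sub])
    then show ?thesis using \<delta> by simp
  qed
  show ?thesis by (rule main_C[OF s u a e \<delta>(1) \<delta>(2) hS hm])
qed


lemma part3_inner:
  fixes u :: "'a::euclidean_space \<Rightarrow> real"
  assumes s: "0 < s" "s < 1" and a: "\<alpha> > 0" and u: "in_Ls s u" and e: "set_integrable lborel (ball 0 1) (\<lambda>x. exp (\<alpha> * u x))"
    and d0: "0 < \<delta>0" "\<delta>0 < 1/2"
  shows "(\<integral>X\<in>ball (0::'a) (1/2) \<times> {0..min (1/2) ((\<delta>0 / (sqrt 2 / (1 - 1/2)) powr (real DIM('a) + 2 * s)) powr (1 / (2 * s)))}. wexp s \<alpha> u X \<partial>lborel)
     \<le> Cst s \<alpha> (Ls_norm s (pos_part u)) TYPE('a) * (expL1 \<alpha> u + expL1 \<alpha> u powr (1 - \<delta>0))"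
proof -
  define \<kappa> where "\<kappa> = (sqrt 2 / (1 - 1/2)) powr (real DIM('a) + 2 * s)"
  have \<kappa>: "\<kappa> > 0" unfolding \<kappa>_def by simp
  define r0 where "r0 = min (1/2) ((\<delta>0 / \<kappa>) powr (1 / (2 * s)))"
  have c: "0 < 1 - \<delta>0" "1 - \<delta>0 \<le> 1" using d0 by auto
  have r0h: "r0 \<le> 1/2" by (simp add: r0_def)
  have hS: "norm (fst X) \<le> 1/2 \<and> 0 \<le> snd X \<and> snd X \<le> 1/2" if "X \<in> ball (0::'a) (1/2) \<times> {0..r0}" for X
    using that r0h by auto
  have hm: "1 - \<delta>0 \<le> (\<integral>y. indicator (ball 0 1) y * Pker s (x::'a,t) y \<partial>lborel)"
    if xt: "(x,t) \<in> ball (0::'a) (1/2) \<times> {0..r0}" and t: "t > 0" for x t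
  proof -
    have nx: "norm x \<le> 1/2" and tr: "t \<le> (\<delta>0 / \<kappa>) powr (1 / (2 * s))" using xt by (auto simp: r0_def)
    have "t powr (2 * s) \<le> ((\<delta>0 / \<kappa>) powr (1 / (2 * s))) powr (2 * s)"
      using tr t s by (intro powr_mono2) auto
    also have "\<dots> = \<delta>0 / \<kappa>" using s d0 \<kappa> by (simp add: powr_powr)
    finally have "\<kappa> * t powr (2 * s) \<le> \<delta>0" using \<kappa> by (simp add: field_simps)
    then show ?thesis using m_near1[OF s(1) t nx] by (simp add: \<kappa>_def)
  qed
  have "(\<integral>X\<in>ball (0::'a) (1/2) \<times> {0..r0}. wexp s \<alpha> u X \<partial>lborel) \<le> Cst s \<alpha> (Ls_norm s (pos_part u)) TYPE('a) * (expL1 \<alpha> u + expL1 \<alpha> u powr (1 - \<delta>0))"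
    by (rule main_C[where S="ball (0::'a) (1/2) \<times> {0..r0}", OF s u a e c hS hm])
  then show ?thesis by (simp add: r0_def \<kappa>_def)
qed



theorem lemma3p1:
  fixes s :: real
  assumes "0 < s" "s < 1"
  shows
   "(\<forall>(\<alpha>::real) (u::'a::euclidean_space \<Rightarrow> real).
       \<alpha> > 0 \<and> in_Ls s u \<and> set_integrable lborel (ball 0 1) (\<lambda>x. exp (\<alpha> * u x)) \<longrightarrow>
       locally_L1_on (wexp s \<alpha> u) (ball (0::'a) 1 \<times> {0..}))
  \<and> (\<exists>\<delta>>0. \<forall>\<alpha>>0. \<forall>N. \<exists>C>0. \<forall>u::'a \<Rightarrow> real.
       in_Ls s u \<and> set_integrable lborel (ball 0 1) (\<lambda>x. exp (\<alpha> * u x))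
       \<and> Ls_norm s (pos_part u) = N \<longrightarrow>
       (\<integral>X\<in>Dhalf (1/2). wexp s \<alpha> u X \<partial>lborel)
          \<le> C * (expL1 \<alpha> u + expL1 \<alpha> u powr \<delta>))
  \<and> (\<exists>\<epsilon>>0. \<exists>r0::real \<Rightarrow> real. (\<forall>\<delta>0. 0 < \<delta>0 \<and> \<delta>0 < \<epsilon> \<longrightarrow> r0 \<delta>0 > 0) \<and>
       (\<forall>\<alpha>>0. \<forall>N. \<exists>C>0. \<forall>\<delta>0 (u::'a \<Rightarrow> real).
          0 < \<delta>0 \<and> \<delta>0 < \<epsilon> \<and>
          in_Ls s u \<and> set_integrable lborel (ball 0 1) (\<lambda>x. exp (\<alpha> * u x))
          \<and> Ls_norm s (pos_part u) = N \<longrightarrow>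
          (\<integral>X\<in>ball (0::'a) (1/2) \<times> {0..r0 \<delta>0}. wexp s \<alpha> u X \<partial>lborel)
             \<le> C * (expL1 \<alpha> u + expL1 \<alpha> u powr (1 - \<delta>0))))"
proof -
  have s: "0 < s" "s < 1" using assms by auto
  have P1: "\<forall>(\<alpha>::real) (u::'a::euclidean_space \<Rightarrow> real).
       \<alpha> > 0 \<and> in_Ls s u \<and> set_integrable lborel (ball 0 1) (\<lambda>x. exp (\<alpha> * u x)) \<longrightarrow>
       locally_L1_on (wexp s \<alpha> u) (ball (0::'a) 1 \<times> {0..})"
    unfolding locally_L1_on_def using part1[OF s] by blast
  define c1 where "c1 = d_const s TYPE('a) * unit_ball_vol (real DIM('a)) / sqrt 2 powr (real DIM('a) + 2 * s)"
  have c1p: "c1 > 0" unfolding c1_def using d_pos[OF s(1), where 'a='a] by simp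
  define \<delta> where "\<delta> = min 1 c1"
  have \<delta>: "0 < \<delta>" "\<delta> \<le> 1" "\<delta> \<le> c1" using c1p by (auto simp: \<delta>_def)
  have P2: "\<forall>\<alpha>>0. \<forall>N. \<exists>C>0. \<forall>u::'a \<Rightarrow> real.
       in_Ls s u \<and> set_integrable lborel (ball 0 1) (\<lambda>x. exp (\<alpha> * u x))
       \<and> Ls_norm s (pos_part u) = N \<longrightarrow>
       (\<integral>X\<in>Dhalf (1/2). wexp s \<alpha> u X \<partial>lborel)
          \<le> C * (expL1 \<alpha> u + expL1 \<alpha> u powr \<delta>)"
  proof (intro allI impI)
    fix \<alpha> N :: real assume a: "\<alpha> > 0"
    have "\<forall>u::'a \<Rightarrow> real.
       in_Ls s u \<and> set_integrable lborel (ball 0 1) (\<lambda>x. exp (\<alpha> * u x))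
       \<and> Ls_norm s (pos_part u) = N \<longrightarrow>
       (\<integral>X\<in>Dhalf (1/2). wexp s \<alpha> u X \<partial>lborel)
          \<le> Cst s \<alpha> N TYPE('a) * (expL1 \<alpha> u + expL1 \<alpha> u powr \<delta>)"
    proof (intro allI impI)
      fix u :: "'a \<Rightarrow> real"
      assume H: "in_Ls s u \<and> set_integrable lborel (ball 0 1) (\<lambda>x. exp (\<alpha> * u x)) \<and> Ls_norm s (pos_part u) = N"
      then show "(\<integral>X\<in>Dhalf (1/2). wexp s \<alpha> u X \<partial>lborel) \<le> Cst s \<alpha> N TYPE('a) * (expL1 \<alpha> u + expL1 \<alpha> u powr \<delta>)"
        using part2_inner[OF s a _ _ \<delta>(1) \<delta>(2) \<delta>(3)[unfolded c1_def], of u] by auto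
    qed
    then show "\<exists>C>0. \<forall>u::'a \<Rightarrow> real.
       in_Ls s u \<and> set_integrable lborel (ball 0 1) (\<lambda>x. exp (\<alpha> * u x))
       \<and> Ls_norm s (pos_part u) = N \<longrightarrow>
       (\<integral>X\<in>Dhalf (1/2). wexp s \<alpha> u X \<partial>lborel)
          \<le> C * (expL1 \<alpha> u + expL1 \<alpha> u powr \<delta>)"
      using Cst_pos[OF s(2), of \<alpha> N, where 'a='a] by blast
  qed
  define r0 where "r0 = (\<lambda>\<delta>0. min (1/2) ((\<delta>0 / (sqrt 2 / (1 - 1/2)) powr (real DIM('a) + 2 * s)) powr (1 / (2 * s))))"
  have r0p: "\<forall>\<delta>0. 0 < \<delta>0 \<and> \<delta>0 < 1/2 \<longrightarrow> r0 \<delta>0 > 0" by (auto simp: r0_def)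
  have P3: "\<forall>\<alpha>>0. \<forall>N. \<exists>C>0. \<forall>\<delta>0 (u::'a \<Rightarrow> real).
          0 < \<delta>0 \<and> \<delta>0 < 1/2 \<and>
          in_Ls s u \<and> set_integrable lborel (ball 0 1) (\<lambda>x. exp (\<alpha> * u x))
          \<and> Ls_norm s (pos_part u) = N \<longrightarrow>
          (\<integral>X\<in>ball (0::'a) (1/2) \<times> {0..r0 \<delta>0}. wexp s \<alpha> u X \<partial>lborel)
             \<le> C * (expL1 \<alpha> u + expL1 \<alpha> u powr (1 - \<delta>0))"
  proof (intro allI impI)
    fix \<alpha> N :: real assume a: "\<alpha> > 0"
    have "\<forall>\<delta>0 (u::'a \<Rightarrow> real).
          0 < \<delta>0 \<and> \<delta>0 < 1/2 \<and>
          in_Ls s u \<and> set_integrable lborel (ball 0 1) (\<lambda>x. exp (\<alpha> * u x))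
          \<and> Ls_norm s (pos_part u) = N \<longrightarrow>
          (\<integral>X\<in>ball (0::'a) (1/2) \<times> {0..r0 \<delta>0}. wexp s \<alpha> u X \<partial>lborel)
             \<le> Cst s \<alpha> N TYPE('a) * (expL1 \<alpha> u + expL1 \<alpha> u powr (1 - \<delta>0))"
    proof (intro allI impI)
      fix \<delta>0 :: real and u :: "'a \<Rightarrow> real"
      assume H: "0 < \<delta>0 \<and> \<delta>0 < 1/2 \<and> in_Ls s u \<and> set_integrable lborel (ball 0 1) (\<lambda>x. exp (\<alpha> * u x)) \<and> Ls_norm s (pos_part u) = N"
      then show "(\<integral>X\<in>ball (0::'a) (1/2) \<times> {0..r0 \<delta>0}. wexp s \<alpha> u X \<partial>lborel)
             \<le> Cst s \<alpha> N TYPE('a) * (expL1 \<alpha> u + expL1 \<alpha> u powr (1 - \<delta>0))"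
        using part3_inner[OF s a, of u \<delta>0] by (auto simp: r0_def)
    qed
    then show "\<exists>C>0. \<forall>\<delta>0 (u::'a \<Rightarrow> real).
          0 < \<delta>0 \<and> \<delta>0 < 1/2 \<and>
          in_Ls s u \<and> set_integrable lborel (ball 0 1) (\<lambda>x. exp (\<alpha> * u x))
          \<and> Ls_norm s (pos_part u) = N \<longrightarrow>
          (\<integral>X\<in>ball (0::'a) (1/2) \<times> {0..r0 \<delta>0}. wexp s \<alpha> u X \<partial>lborel)
             \<le> C * (expL1 \<alpha> u + expL1 \<alpha> u powr (1 - \<delta>0))"
      using Cst_pos[OF s(2), of \<alpha> N, where 'a='a] by blast
  qed
  have "\<exists>\<epsilon>>0. \<exists>r0::real \<Rightarrow> real. (\<forall>\<delta>0. 0 < \<delta>0 \<and> \<delta>0 < \<epsilon> \<longrightarrow> r0 \<delta>0 > 0) \<and>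
       (\<forall>\<alpha>>0. \<forall>N. \<exists>C>0. \<forall>\<delta>0 (u::'a \<Rightarrow> real).
          0 < \<delta>0 \<and> \<delta>0 < \<epsilon> \<and>
          in_Ls s u \<and> set_integrable lborel (ball 0 1) (\<lambda>x. exp (\<alpha> * u x))
          \<and> Ls_norm s (pos_part u) = N \<longrightarrow>
          (\<integral>X\<in>ball (0::'a) (1/2) \<times> {0..r0 \<delta>0}. wexp s \<alpha> u X \<partial>lborel)
             \<le> C * (expL1 \<alpha> u + expL1 \<alpha> u powr (1 - \<delta>0)))"
    apply (rule exI[of _ "1/2"])
    apply (rule conjI, simp)
    apply (rule exI[of _ r0])
    using r0p P3 by blast
  then show ?thesis using P1 P2 \<delta>(1) by blast
qed

end
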